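(* Let $S_{r,N}$ be an atomic exponential Puiseux semiring with $r\neq 1$. Then there exists $B\in\mathbb{N}$ such that for every $x\in S_{r,N}$ the set of lengths $\mathsf{L}(x)$ is an almost arithmetic progression with difference $|\mathsf{n}(r)-\mathsf{d}(r)|$ and bound $B$.
   Context: $\mathbb{N}=\{0,1,2,\dots\}$. A numerical monoid $N$ is an additive submonoid of $\mathbb{N}$ with finite complement in $\mathbb{N}$. For $r\in\mathbb{Q}_{>0}$ write $r=\mathsf{n}(r)/\mathsf{d}(r)$ with $\mathsf{n}(r),\mathsf{d}(r)$ coprime positive integers. The exponential Puiseux semiring $S_{r,N}$ is the additive submonoid of $\mathbb{Q}_{\ge0}$ generated by $\{r^k:k\in N\}$; if $r\in\mathbb{N}$ it equals $\mathbb{N}$; if $r\notin\mathbb{N}$ it is atomic iff $\mathsf{n}(r)>1$, with atoms $r^s$, $s\in N$. For an atomic monoid, $\mathsf{L}(x)$ is the set of lengths of factorizations of $x$ into atoms. For a positive integer $d$ and $B\in\mathbb{N}$, a set $L\subseteq\mathbb{Z}$ is an almost arithmetic progression (AAP) with difference $d$ and bound $B$ if $L=y+(L'\cup L^*\cup L'')\subseteq y+d\mathbb{Z}$ where $y\in\mathbb{Z}$, $L^*$ is a nonempty (possibly infinite) arithmetic progression with difference $d$ and $\min L^*=0$, $L'\subseteq[-B,-1]$, and $L''\subseteq\sup L^*+[1,B]$, with $L''=\emptyset$ if $L^*$ is infinite. *)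

theory Defs
  imports Complex_Main "HOL-Library.Multiset"
begin

definition numer :: "rat \<Rightarrow> int" where "numer r = fst (quotient_of r)"
definition denom :: "rat \<Rightarrow> int" where "denom r = snd (quotient_of r)"

definition numerical_monoid :: "nat set \<Rightarrow> bool" where
  "numerical_monoid N \<longleftrightarrow> 0 \<in> N \<and> (\<forall>a\<in>N. \<forall>b\<in>N. a + b \<in> N) \<and> finite (UNIV - N)"

definition gen_monoid :: "rat set \<Rightarrow> rat set" where
  "gen_monoid G = {sum_mset m | m. set_mset m \<subseteq> G}"

definition exp_puiseux :: "rat \<Rightarrow> nat set \<Rightarrow> rat set" where
  "exp_puiseux r N = gen_monoid {r ^ k | k. k \<in> N}"

text \<open>Atoms of a submonoid M of the nonnegative rationals (its only unit is 0).\<close>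
definition atoms :: "rat set \<Rightarrow> rat set" where
  "atoms M = {a \<in> M. a \<noteq> 0 \<and> (\<forall>b\<in>M. \<forall>c\<in>M. a = b + c \<longrightarrow> b = 0 \<or> c = 0)}"

definition atomic :: "rat set \<Rightarrow> bool" where
  "atomic M \<longleftrightarrow> (\<forall>x\<in>M. x \<noteq> 0 \<longrightarrow> (\<exists>m. set_mset m \<subseteq> atoms M \<and> sum_mset m = x))"

definition lengths :: "rat set \<Rightarrow> rat \<Rightarrow> nat set" where
  "lengths M x = {size m | m. set_mset m \<subseteq> atoms M \<and> sum_mset m = x}"

definition AAP :: "int \<Rightarrow> nat \<Rightarrow> int set \<Rightarrow> bool" where
  "AAP d B L \<longleftrightarrow> (\<exists>y L1 Ls L2.
     L = (\<lambda>z. y + z) ` (L1 \<union> Ls \<union> L2) \<and> (\<forall>z\<in>L. d dvd (z - y)) \<and>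
     L1 \<subseteq> {- int B .. -1} \<and>
     ((Ls = {d * int k | k. True} \<and> L2 = {}) \<or>
      (\<exists>n\<ge>1. Ls = {d * int k | k. k < n} \<and>
               L2 \<subseteq> {Max Ls + 1 .. Max Ls + int B})))"

end

theory Submission
  imports Defs "HOL-Library.Groups_Big_Fun" "HOL-Library.Infinite_Set"
begin


definition fs :: "(nat \<Rightarrow> int) \<Rightarrow> bool" where
  "fs F \<longleftrightarrow> (\<exists>M. \<forall>i\<ge>M. F i = 0)"

definition pb :: "(nat \<Rightarrow> int) \<Rightarrow> (nat \<Rightarrow> int) \<Rightarrow> nat \<Rightarrow> int" where
  "pb B F i = (if i = 0 then 0 else B (i - 1) * F (i - 1))"

definition zz :: "(nat \<Rightarrow> int) \<Rightarrow> (nat \<Rightarrow> int) \<Rightarrow> (nat \<Rightarrow> int) \<Rightarrow> (nat \<Rightarrow> int) \<Rightarrow> nat \<Rightarrow> int" where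
  "zz A B zs F i = zs i + A i * F i - pb B F i"

definition sig :: "(nat \<Rightarrow> int) \<Rightarrow> (nat \<Rightarrow> int) \<Rightarrow> int" where
  "sig w F = Sum_any (\<lambda>i. w i * F i)"

lemma fs_finite: "fs F \<Longrightarrow> finite {i. F i \<noteq> 0}"
  unfolding fs_def by (metis (mono_tags, lifting) finite_nat_set_iff_bounded_le mem_Collect_eq nat_le_linear not_less_eq_eq)

lemma fs_bound: "fs F \<Longrightarrow> \<exists>M. \<forall>i\<ge>M. F i = 0"
  unfolding fs_def by auto

lemma sig_sum: assumes "\<forall>i\<ge>M. F i = 0" shows "sig w F = (\<Sum>i<M. w i * F i)"
  unfolding sig_def
  by (rule Sum_any.expand_superset) (use assms in \<open>auto simp: not_less[symmetric]\<close>)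

lemma fs_upd: "fs F \<Longrightarrow> fs (F(j := v))"
  unfolding fs_def
  by (metis fun_upd_apply le_trans nat_le_linear not_less_eq_eq)

lemma sig_upd: assumes "fs F" shows "sig w (F(j := v)) = sig w F + w j * (v - F j)"
proof -
  obtain M where M: "\<forall>i\<ge>M. F i = 0" using assms fs_def by auto
  define M' where "M' = max M (Suc j)"
  have M': "\<forall>i\<ge>M'. F i = 0" "\<forall>i\<ge>M'. (F(j:=v)) i = 0" "j \<in> {..<M'}"
    using M by (auto simp: M'_def)
  have "sig w (F(j := v)) = (\<Sum>i<M'. w i * (F(j:=v)) i)" by (rule sig_sum[OF M'(2)])
  also have "\<dots> = (\<Sum>i<M'. w i * F i + (if i = j then w j * (v - F j) else 0))"
    by (rule sum.cong) (auto simp: algebra_simps)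
  also have "\<dots> = (\<Sum>i<M'. w i * F i) + w j * (v - F j)"
    using M'(3) by (simp add: sum.distrib)
  also have "(\<Sum>i<M'. w i * F i) = sig w F" by (rule sig_sum[OF M'(1), symmetric])
  finally show ?thesis .
qed

lemma sig_diff: assumes "fs F" "fs G" "\<forall>i>p. F i = G i"
  shows "sig w F - sig w G = (\<Sum>i\<le>p. w i * (F i - G i))"
proof -
  obtain M1 where M1: "\<forall>i\<ge>M1. F i = 0" using assms fs_def by auto
  obtain M2 where M2: "\<forall>i\<ge>M2. G i = 0" using assms fs_def by auto
  define M where "M = max (max M1 M2) (Suc p)"
  have "sig w F - sig w G = (\<Sum>i<M. w i * F i) - (\<Sum>i<M. w i * G i)"
    using M1 M2 by (simp add: sig_sum[of M] M_def)
  also have "\<dots> = (\<Sum>i<M. w i * (F i - G i))"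
    by (simp add: sum_subtractf algebra_simps)
  also have "\<dots> = (\<Sum>i\<le>p. w i * (F i - G i))"
  proof (rule sum.mono_neutral_right)
    show "{..p} \<subseteq> {..<M}" by (auto simp: M_def)
    show "\<forall>i\<in>{..<M} - {..p}. w i * (F i - G i) = 0" using assms(3) by auto
  qed auto
  finally show ?thesis .
qed

lemma zz_upd: "zz A B zs (F(j := v)) i = zz A B zs F i + (if i = j then A j * (v - F j) else 0)
    - (if i = Suc j then B j * (v - F j) else 0)"
  unfolding zz_def pb_def by (auto simp: algebra_simps)

lemma div_diff_le: fixes X Y B :: int assumes "B \<ge> 1" "Y \<le> X" shows "X div B - Y div B \<le> X - Y + 1"
proof -
  have e: "X div B = Y div B + (X - Y) div B + (Y mod B + (X - Y) mod B) div B"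
    using div_add1_eq[of Y "X-Y" B] by simp
  have m1: "0 \<le> Y mod B" "Y mod B < B" "0 \<le> (X-Y) mod B" "(X-Y) mod B < B" using assms by auto
  have "(Y mod B + (X - Y) mod B) div B \<le> (2*B - 1) div B"
    using m1 assms by (intro zdiv_mono1) linarith+
  also have "(2*B - 1) div B \<le> 1"
  proof -
    have "(2*B - 1) = B * 1 + (B - 1)" by simp
    hence "(2*B - 1) div B = 1 + (B - 1) div B" using assms by (metis add.commute div_mult_self2 mult.commute not_one_le_zero zero_less_one_class.zero_le_one div_add_self1 less_le_trans linorder_not_le zero_less_one)
    moreover have "(B - 1) div B = 0" using assms by (intro div_pos_pos_trivial) auto
    ultimately show ?thesis by simp
  qed
  finally have "(Y mod B + (X - Y) mod B) div B \<le> 1" .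
  moreover have "(X - Y) div B \<le> X - Y" using assms int_div_le_self by force
  ultimately show ?thesis using e by linarith
qed
lemma ceil_ge: fixes X B :: int assumes "B \<ge> 1" shows "X \<le> B * ((X + B - 1) div B)"
proof -
  have "X + B - 1 = B * ((X + B - 1) div B) + (X + B - 1) mod B" by simp
  moreover have "(X + B - 1) mod B < B" using assms by simp
  ultimately show ?thesis by linarith
qed
lemma ceil_le: fixes X B g :: int assumes "B \<ge> 1" "X \<le> B * g" shows "(X + B - 1) div B \<le> g"
proof -
  have "(X + B - 1) div B \<le> (B * g + (B - 1)) div B" using assms by (intro zdiv_mono1) auto
  also have "(B * g + (B - 1)) div B = g + (B - 1) div B" using assms by simp
  also have "(B - 1) div B = 0" using assms by (intro div_pos_pos_trivial) auto
  finally show ?thesis by simp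
qed
lemma floor_ge: fixes X B g :: int assumes "B \<ge> 1" "B * g \<le> X" shows "g \<le> X div B"
  using assms by (metis mult.commute zdiv_mono1 nonzero_mult_div_cancel_left not_one_le_zero order_le_less_trans zero_less_one linorder_not_le)
lemma floor_le: fixes X B :: int assumes "B \<ge> 1" shows "B * (X div B) \<le> X"
  using assms by (metis div_mult_mod_eq le_add_same_cancel1 mult.commute pos_mod_sign order_less_le_trans zero_less_one linorder_not_le)

lemma fs_zero: "fs (\<lambda>i. 0)" unfolding fs_def by auto

lemma fs_min: "fs F \<Longrightarrow> fs G \<Longrightarrow> fs (\<lambda>i. min (F i) (G i))"
  unfolding fs_def by (metis (no_types, lifting) min.idem le_trans nat_le_linear)

lemma sig_zero: "sig w (\<lambda>i. 0) = 0" unfolding sig_def by simp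

lemma pb_mono: assumes "\<And>i. B i \<ge> 0" "\<And>i. G i \<le> F i" shows "pb B G i \<le> pb B F i"
  unfolding pb_def using assms by (auto intro: mult_left_mono)

locale sysc =
  fixes A B w :: "nat \<Rightarrow> int" and p :: nat and a b :: int
  assumes A1: "\<And>i. A i \<ge> 1" and B1: "\<And>i. B i \<ge> 1" and w1: "\<And>i. w i \<ge> 1"
    and tA: "\<And>i. i \<ge> p \<Longrightarrow> A i = a" and tB: "\<And>i. i \<ge> p \<Longrightarrow> B i = b"
    and tw: "\<And>i. i \<ge> p \<Longrightarrow> w i = 1"
begin

lemma a1: "a \<ge> 1" using A1[of p] tA[of p] by simp
lemma b1: "b \<ge> 1" using B1[of p] tB[of p] by simp

definition feas :: "(nat \<Rightarrow> int) \<Rightarrow> (nat \<Rightarrow> int) \<Rightarrow> bool" where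
  "feas zs F \<longleftrightarrow> fs F \<and> (\<forall>i. zz A B zs F i \<ge> 0)"

definition Lam :: "(nat \<Rightarrow> int) \<Rightarrow> int set" where
  "Lam zs = sig w ` {F. feas zs F}"

definition W :: int where "W = sum w {..p}"

lemma W1: "W \<ge> 1" unfolding W_def using w1[of 0] 
  by (metis atMost_iff finite_atMost le0 order_trans sum_nonneg_leq_bound sum_nonneg w1 zero_le_one order.trans) 

lemma w_le_W: "j \<le> p \<Longrightarrow> w j \<le> W"
  unfolding W_def by (rule member_le_sum) (use w1 in \<open>auto intro: order_trans[OF zero_le_one]\<close>)

lemma feas_zero: "(\<And>i. zs i \<ge> 0) \<Longrightarrow> feas zs (\<lambda>i. 0)"
  unfolding feas_def zz_def pb_def using fs_zero by auto

lemma feas_minI: assumes "feas zs F" "feas zs G" shows "feas zs (\<lambda>i. min (F i) (G i))"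
  unfolding feas_def
proof (intro conjI allI)
  show "fs (\<lambda>i. min (F i) (G i))" using assms fs_min unfolding feas_def by auto
  fix i
  have B0: "\<And>i. B i \<ge> 0" using B1 by (meson order_trans zero_le_one)
  have pF: "pb B (\<lambda>i. min (F i) (G i)) i \<le> pb B F i" by (rule pb_mono[OF B0]) auto
  have pG: "pb B (\<lambda>i. min (F i) (G i)) i \<le> pb B G i" by (rule pb_mono[OF B0]) auto
  have "zz A B zs F i \<ge> 0" "zz A B zs G i \<ge> 0" using assms unfolding feas_def by auto
  then show "zz A B zs (\<lambda>i. min (F i) (G i)) i \<ge> 0"
    using pF pG unfolding zz_def by (cases "F i \<le> G i") (auto simp: min_def)
qed

lemma feas_upd: "feas zs F \<Longrightarrow> (\<And>i. zz A B zs (F(j:=v)) i \<ge> 0) \<Longrightarrow> feas zs (F(j := v))"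
  unfolding feas_def using fs_upd by auto


primrec Cd :: "nat \<Rightarrow> int" where
  "Cd 0 = a * W"
| "Cd (Suc k) = A (p - k) * (Cd k + 1) + 1"

lemma Cd_nonneg: "Cd k \<ge> 0"
proof (induction k)
  case 0 then show ?case using a1 W1 by simp
next
  case (Suc k) then show ?case using A1[of "p - k"] by simp
qed

definition K1 :: int where "K1 = (\<Sum>i\<le>p. w i * Cd (p - i))"

end

locale sysz = sysc +
  fixes zs :: "nat \<Rightarrow> int"
  assumes zs0: "\<And>i. zs i \<ge> 0"
    and mn: "\<And>F. feas zs F \<Longrightarrow> sig w F \<ge> 0"
begin

lemma nonneg: assumes "feas zs F" shows "F i \<ge> 0"
proof (rule ccontr)
  assume neg: "\<not> F i \<ge> 0"
  define G where "G = (\<lambda>i. min (F i) 0)"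
  have fG: "feas zs G" unfolding G_def using feas_minI[OF assms feas_zero[OF zs0]] by simp
  obtain M where M: "\<forall>j\<ge>M. F j = 0" using assms unfolding feas_def fs_def by auto
  have iM: "i < M"
  proof (rule ccontr)
    assume "\<not> i < M" then have "F i = 0" using M by auto
    with neg show False by simp
  qed
  have MG: "\<forall>j\<ge>M. G j = 0" using M by (simp add: G_def)
  have "sig w G = (\<Sum>j<M. w j * G j)" by (rule sig_sum[OF MG])
  also have "\<dots> = w i * G i + (\<Sum>j\<in>{..<M} - {i}. w j * G j)"
    using iM by (simp add: sum.remove)
  also have "(\<Sum>j\<in>{..<M} - {i}. w j * G j) \<le> 0"
  proof (rule sum_nonpos)
    fix j have "w j \<ge> 0" using w1[of j] by simp
    moreover have "G j \<le> 0" by (simp add: G_def)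
    ultimately show "w j * G j \<le> 0" by (rule mult_nonneg_nonpos)
  qed
  also have "w i * G i < 0" using neg w1[of i] by (simp add: G_def mult_pos_neg)
  finally have "sig w G < 0" by simp
  with mn[OF fG] show False by simp
qed

lemma zs_lt: "zs i < A i"
proof (rule ccontr)
  assume "\<not> zs i < A i"
  define F where "F = (\<lambda>j::nat. 0::int)(i := -1)"
  have "zz A B zs (\<lambda>j. 0) j = zs j" for j unfolding zz_def pb_def by simp
  moreover have "zs (Suc i) + B i \<ge> 0" using zs0[of "Suc i"] B1[of i] by simp
  ultimately have "feas zs F" unfolding F_def
    using \<open>\<not> zs i < A i\<close> zs0 by (intro feas_upd feas_zero) (auto simp: zz_upd)
  then have "F i \<ge> 0" by (rule nonneg)
  then show False by (simp add: F_def)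
qed

lemma lowest: assumes "feas zs F" "F i \<noteq> 0"
  shows "\<exists>j\<le>i. F j > 0 \<and> (\<forall>k<j. F k = 0)"
proof -
  define j where "j = (LEAST j. F j \<noteq> 0)"
  have "F j \<noteq> 0" using assms(2) unfolding j_def by (rule LeastI)
  moreover have "j \<le> i" using assms(2) unfolding j_def by (rule Least_le)
  moreover have "\<forall>k<j. F k = 0" unfolding j_def using not_less_Least by blast
  ultimately show ?thesis using nonneg[OF assms(1)] by (metis order.not_eq_order_implies_strict)
qed

lemma low_dec: assumes "feas zs F" "F j > 0" "\<forall>k<j. F k = 0"
  shows "feas zs (F(j := F j - 1))"
proof (rule feas_upd[OF assms(1)])
  fix i
  have z: "zz A B zs F i \<ge> 0" using assms(1) feas_def by auto
  have pj: "pb B F j = 0" using assms(3) unfolding pb_def by auto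
  have "zs j + A j * (F j - 1) \<ge> 0" using assms(2) zs0[of j] A1[of j] by (simp add: add_nonneg_nonneg)
  then have zj: "zz A B zs F j - A j \<ge> 0" using pj unfolding zz_def by (simp add: algebra_simps)
  show "zz A B zs (F(j := F j - 1)) i \<ge> 0"
    using z zj B1[of j] by (auto simp: zz_upd)
qed

lemma sig_dec: "feas zs F \<Longrightarrow> sig w (F(j := F j - t)) = sig w F - w j * t"
  using sig_upd[of F w j] unfolding feas_def by simp

lemma hz: "feas zs F \<Longrightarrow> \<forall>i\<le>p. F i = 0 \<Longrightarrow> sig w F = int n \<Longrightarrow> int m \<le> int n \<Longrightarrow> int m \<in> Lam zs"
proof (induction n arbitrary: F m)
  case 0
  then show ?case unfolding Lam_def by (metis image_eqI le_zero_eq mem_Collect_eq of_nat_0_le_iff of_nat_le_iff)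
next
  case (Suc n)
  show ?case
  proof (cases "m = Suc n")
    case True then show ?thesis using Suc.prems unfolding Lam_def by (metis image_eqI mem_Collect_eq)
  next
    case False
    have "\<exists>i. F i \<noteq> 0"
    proof (rule ccontr)
      assume "\<not> ?thesis"
      then have "F = (\<lambda>i. 0)" by auto
      then show False using Suc.prems(3) sig_zero by simp
    qed
    then obtain i where "F i \<noteq> 0" by auto
    then obtain j where j: "F j > 0" "\<forall>k<j. F k = 0" using lowest[OF Suc.prems(1)] by blast
    have jp: "j > p" using j Suc.prems(2) by (cases "j \<le> p") auto
    have f': "feas zs (F(j := F j - 1))" by (rule low_dec[OF Suc.prems(1) j])
    have s': "sig w (F(j := F j - 1)) = int n" using sig_dec[OF Suc.prems(1), of j 1] tw[of j] jp Suc.prems(3) by simp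
    show ?thesis
      by (rule Suc.IH[OF f' _ s']) (use jp Suc.prems False in auto)
  qed
qed

definition good :: "(nat \<Rightarrow> int) \<Rightarrow> bool" where
  "good F \<longleftrightarrow> zz A B zs F (Suc p) \<ge> a * W"

lemma good_all: "feas zs F \<Longrightarrow> good F \<Longrightarrow> sig w F = int n \<Longrightarrow> int m \<le> int n \<Longrightarrow> int m \<in> Lam zs"
proof (induction n arbitrary: F m rule: less_induct)
  case (less n)
  show ?case
  proof (cases "\<forall>i\<le>p. F i = 0")
    case True then show ?thesis using hz less.prems by blast
  next
    case False
    then obtain i where "i \<le> p" "F i \<noteq> 0" by auto
    then obtain j where j: "j \<le> p" "F j > 0" "\<forall>k<j. F k = 0" using lowest[OF less.prems(1)] by (meson order_trans)
    define F' where "F' = F(j := F j - 1)"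
    have f': "feas zs F'" unfolding F'_def by (rule low_dec[OF less.prems(1) j(2,3)])
    have g': "good F'" using less.prems(2) j(1) B1[of j] unfolding good_def F'_def by (auto simp: zz_upd)
    have s': "sig w F' = int n - w j" using sig_dec[OF less.prems(1), of j 1] less.prems(3) unfolding F'_def by simp
    have wj: "1 \<le> w j" "w j \<le> W" using w1 w_le_W j(1) by auto
    have nn: "sig w F' \<ge> 0" using mn[OF f'] .
    define n' where "n' = nat (int n - w j)"
    have n': "sig w F' = int n'" "n' < n" using s' nn wj unfolding n'_def by auto
    show ?thesis
    proof (cases "int m \<le> int n'")
      case True then show ?thesis using less.IH[OF n'(2) f' g' n'(1)] by blast
    next
      case False
      define t where "t = int n - int m"
      have t: "0 \<le> t" "t \<le> W" using False less.prems(4) wj n'(1) s' unfolding t_def by auto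
      define G where "G = F(Suc p := F (Suc p) - t)"
      have zp: "zz A B zs F (Suc p) \<ge> a * W" using less.prems(2) good_def by auto
      have "a * t \<le> a * W" using t a1 by (intro mult_left_mono) auto
      moreover have "B (Suc p) * t \<ge> 0" using B1[of "Suc p"] t by simp
      ultimately have fG: "feas zs G" unfolding G_def
      proof (intro feas_upd[OF less.prems(1)])
        fix i
        assume at: "a * t \<le> a * W" and Bt: "B (Suc p) * t \<ge> 0"
        have z: "zz A B zs F i \<ge> 0" using less.prems(1) feas_def by auto
        show "zz A B zs (F(Suc p := F (Suc p) - t)) i \<ge> 0"
        proof (cases "i = Suc p")
          case True then show ?thesis using zp tA[of "Suc p"] at by (simp add: zz_upd algebra_simps)
        next
          case False then show ?thesis using z Bt by (cases "i = Suc (Suc p)") (auto simp: zz_upd)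
        qed
      qed
      have "sig w G = int m" unfolding G_def using sig_dec[OF less.prems(1), of "Suc p" t] tw[of "Suc p"] less.prems(3)
        by (simp add: t_def)
      then show ?thesis using fG unfolding Lam_def by (metis image_eqI mem_Collect_eq)
    qed
  qed
qed


end

lemma div_le_self': fixes X B :: int assumes "B \<ge> 1" "0 \<le> X" shows "X div B \<le> X"
  using assms(2) int_div_le_self by force

context sysz begin

lemma fl: assumes "feas zs F" "Suc k \<le> p"
  shows "F (p - Suc k) \<le> (zs (p - k) + A (p - k) * F (p - k)) div B (p - Suc k)"
proof -
  have "zz A B zs F (p - k) \<ge> 0" using assms feas_def by auto
  moreover have "pb B F (p - k) = B (p - Suc k) * F (p - Suc k)"
    using assms(2) unfolding pb_def by (simp add: Suc_diff_Suc diff_diff_left)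
  ultimately have "B (p - Suc k) * F (p - Suc k) \<le> zs (p - k) + A (p - k) * F (p - k)"
    unfolding zz_def by simp
  then show ?thesis by (rule floor_ge[OF B1])
qed

primrec Vd :: "(nat \<Rightarrow> int) \<Rightarrow> nat \<Rightarrow> int" where
  "Vd F 0 = F p - a * W"
| "Vd F (Suc k) = min (F (p - Suc k)) ((zs (p - k) + A (p - k) * Vd F k) div B (p - Suc k))"

lemma Vd_props: assumes "feas zs F" "F p \<ge> a * W"
  shows "k \<le> p \<Longrightarrow> 0 \<le> Vd F k \<and> Vd F k \<le> F (p - k) \<and> F (p - k) - Vd F k \<le> Cd k"
proof (induction k)
  case 0 then show ?case using assms a1 W1 by simp
next
  case (Suc k)
  then have IH: "0 \<le> Vd F k" "Vd F k \<le> F (p - k)" "F (p - k) - Vd F k \<le> Cd k" by auto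
  define X where "X = zs (p - k) + A (p - k) * Vd F k"
  define Y where "Y = zs (p - k) + A (p - k) * F (p - k)"
  have X0: "X \<ge> 0" unfolding X_def using zs0[of "p-k"] A1[of "p-k"] IH(1) by simp
  have XY: "X \<le> Y" unfolding X_def Y_def using IH(2) A1[of "p-k"] by (simp add: mult_left_mono)
  have YX: "Y - X = A (p - k) * (F (p - k) - Vd F k)" unfolding X_def Y_def by (simp add: algebra_simps)
  have Fi: "F (p - Suc k) \<le> Y div B (p - Suc k)" unfolding Y_def by (rule fl[OF assms(1) Suc.prems])
  have Fi0: "F (p - Suc k) \<ge> 0" by (rule nonneg[OF assms(1)])
  have Xd: "X div B (p - Suc k) \<ge> 0" using X0 B1[of "p - Suc k"] pos_imp_zdiv_nonneg_iff by simp
  have dd: "Y div B (p - Suc k) - X div B (p - Suc k) \<le> Y - X + 1" by (rule div_diff_le[OF B1 XY])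
  have "Y - X \<le> A (p - k) * Cd k" unfolding YX using IH(3) A1[of "p-k"] by (simp add: mult_left_mono)
  moreover have "A (p - k) * Cd k \<le> A (p - k) * (Cd k + 1)" using A1[of "p-k"] by simp
  ultimately have "F (p - Suc k) - min (F (p - Suc k)) (X div B (p - Suc k)) \<le> Cd (Suc k)"
    using dd Fi Cd_nonneg[of "Suc k"] by (simp add: min_def)
  then show ?case using Fi0 Xd by (simp add: X_def)
qed

definition VV :: "(nat \<Rightarrow> int) \<Rightarrow> nat \<Rightarrow> int" where
  "VV F i = (if i \<le> p then Vd F (p - i) else F i)"

lemma VV_feas_good: assumes "feas zs F" "F p \<ge> a * W"
  shows "feas zs (VV F) \<and> good (VV F) \<and> sig w F - sig w (VV F) \<le> K1"
proof -
  have fsF: "fs F" using assms feas_def by auto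
  have fsV: "fs (VV F)"
  proof -
    obtain M where "\<forall>i\<ge>M. F i = 0" using fsF fs_def by auto
    then have "\<forall>i\<ge>max M (Suc p). VV F i = 0" by (auto simp: VV_def)
    then show ?thesis unfolding fs_def by blast
  qed
  have Vp: "0 \<le> VV F i \<and> VV F i \<le> F i \<and> F i - VV F i \<le> Cd (p - i)" if "i \<le> p" for i
  proof -
    have "p - i \<le> p" by simp
    from Vd_props[OF assms this] show ?thesis using that by (simp add: VV_def)
  qed
  have zF: "\<And>i. zz A B zs F i \<ge> 0" using assms feas_def by auto
  have VVp: "VV F p = F p - a * W" by (simp add: VV_def)
  have z1: "zz A B zs (VV F) (Suc p) = zz A B zs F (Suc p) + b * (a * W)"
    unfolding zz_def pb_def using VVp tB[of p] by (simp add: VV_def algebra_simps)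
  have gd: "good (VV F)" unfolding good_def z1
  proof -
    have aW0: "a * W \<ge> 0" using a1 W1 by simp
    have "a * W \<le> b * (a * W)" using mult_right_mono[of 1 b "a*W"] b1 aW0 by simp
    then show "a * W \<le> zz A B zs F (Suc p) + b * (a * W)" using zF[of "Suc p"] by linarith
  qed
  have fV: "feas zs (VV F)" unfolding feas_def
  proof (intro conjI allI fsV)
    fix i
    show "zz A B zs (VV F) i \<ge> 0"
    proof (cases "i \<le> p")
      case True
      show ?thesis
      proof (cases i)
        case 0 then show ?thesis using Vp[of 0] zs0[of 0] A1[of 0] by (simp add: zz_def pb_def)
      next
        case (Suc j)
        have jk: "p - Suc (p - i) = j" "p - (p - i) = i" "p - j = Suc (p - i)" using True Suc by auto
        have "VV F j = Vd F (p - j)" using True Suc by (simp add: VV_def)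
        also have "\<dots> = Vd F (Suc (p - i))" by (simp only: jk(3))
        also have "\<dots> \<le> (zs i + A i * VV F i) div B j"
          using True by (simp add: VV_def jk(1,2))
        finally have "B j * VV F j \<le> zs i + A i * VV F i"
          using floor_le[OF B1[of j]] B1[of j] by (meson mult_left_mono order_trans zero_le_one)
        then show ?thesis using Suc by (simp add: zz_def pb_def)
      qed
    next
      case False
      show ?thesis
      proof (cases "i = Suc p")
        case True then show ?thesis using z1 zF[of "Suc p"] b1 a1 W1 by simp
      next
        case False
        then have "zz A B zs (VV F) i = zz A B zs F i" using \<open>\<not> i \<le> p\<close>
          unfolding zz_def pb_def VV_def by (cases i) auto
        then show ?thesis using zF by simp
      qed
    qed
  qed
  have "sig w F - sig w (VV F) = (\<Sum>i\<le>p. w i * (F i - VV F i))"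
    by (rule sig_diff[OF fsF fsV]) (auto simp: VV_def)
  also have "\<dots> \<le> K1" unfolding K1_def
    by (rule sum_mono) (use Vp w1 in \<open>auto intro: mult_left_mono order_trans[OF zero_le_one]\<close>)
  finally show ?thesis using fV gd by auto
qed

lemma small_bound: assumes "feas zs F" "F p < a * W"
  shows "k \<le> p \<Longrightarrow> F (p - k) \<le> Cd k"
proof (induction k)
  case 0 then show ?case using assms by simp
next
  case (Suc k)
  then have IH: "F (p - k) \<le> Cd k" by auto
  have "F (p - Suc k) \<le> (zs (p - k) + A (p - k) * F (p - k)) div B (p - Suc k)" by (rule fl[OF assms(1) Suc.prems])
  also have "\<dots> \<le> zs (p - k) + A (p - k) * F (p - k)"
    using zs0[of "p-k"] A1[of "p-k"] nonneg[OF assms(1), of "p-k"] B1 by (intro div_le_self') auto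
  also have "\<dots> \<le> (A (p - k) - 1) + A (p - k) * Cd k"
    using zs_lt[of "p-k"] IH A1[of "p-k"] by (intro add_mono) (auto intro: mult_left_mono)
  also have "\<dots> \<le> Cd (Suc k)" by (simp add: algebra_simps)
  finally show ?case .
qed

definition ZZ :: "(nat \<Rightarrow> int) \<Rightarrow> nat \<Rightarrow> int" where
  "ZZ F i = (if i \<le> p then 0 else F i)"

lemma ZZ_feas: assumes "feas zs F" "F p < a * W"
  shows "feas zs (ZZ F) \<and> (\<forall>i\<le>p. ZZ F i = 0) \<and> sig w F - sig w (ZZ F) \<le> K1"
proof -
  have fsF: "fs F" using assms feas_def by auto
  have fsZ: "fs (ZZ F)"
  proof -
    obtain M where "\<forall>i\<ge>M. F i = 0" using fsF fs_def by auto
    then have "\<forall>i\<ge>M. ZZ F i = 0" by (auto simp: ZZ_def)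
    then show ?thesis unfolding fs_def by blast
  qed
  have zF: "\<And>i. zz A B zs F i \<ge> 0" using assms feas_def by auto
  have fZ: "feas zs (ZZ F)" unfolding feas_def
  proof (intro conjI allI fsZ)
    fix i
    show "zz A B zs (ZZ F) i \<ge> 0"
    proof (cases "i \<le> p")
      case True then show ?thesis using zs0[of i] by (auto simp: zz_def pb_def ZZ_def)
    next
      case False
      show ?thesis
      proof (cases "i = Suc p")
        case True
        have "B p * F p \<ge> 0" using B1[of p] nonneg[OF assms(1), of p] by simp
        then show ?thesis using True zF[of i] by (simp add: zz_def pb_def ZZ_def)
      next
        case False
        then have "zz A B zs (ZZ F) i = zz A B zs F i" using \<open>\<not> i \<le> p\<close>
          unfolding zz_def pb_def ZZ_def by (cases i) auto
        then show ?thesis using zF by simp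
      qed
    qed
  qed
  have "sig w F - sig w (ZZ F) = (\<Sum>i\<le>p. w i * (F i - ZZ F i))"
    by (rule sig_diff[OF fsF fsZ]) (auto simp: ZZ_def)
  also have "\<dots> \<le> K1" unfolding K1_def
  proof (rule sum_mono)
    fix i assume "i \<in> {..p}"
    then have "F i \<le> Cd (p - i)" using small_bound[OF assms, of "p - i"] by simp
    then show "w i * (F i - ZZ F i) \<le> w i * Cd (p - i)"
      using \<open>i \<in> {..p}\<close> w1[of i] by (auto simp: ZZ_def intro: mult_left_mono)
  qed
  finally show ?thesis using fZ by (auto simp: ZZ_def)
qed

lemma Lam_nonneg: "l \<in> Lam zs \<Longrightarrow> 0 \<le> l"
  unfolding Lam_def using mn by auto

lemma zero_Lam: "0 \<in> Lam zs"
proof -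
  have "feas zs (\<lambda>i. 0)" by (rule feas_zero[OF zs0])
  then have "sig w (\<lambda>i. 0) \<in> Lam zs" unfolding Lam_def by (intro imageI CollectI)
  then show ?thesis by (simp add: sig_zero)
qed

lemma main_gt:
  "(\<exists>Y\<ge>0. (\<forall>n. 0 \<le> n \<and> n \<le> Y \<longrightarrow> n \<in> Lam zs) \<and> (\<forall>l\<in>Lam zs. 0 \<le> l \<and> l \<le> Y + K1))
   \<or> ((\<forall>n\<ge>0. n \<in> Lam zs) \<and> (\<forall>l\<in>Lam zs. 0 \<le> l))"
proof (cases "\<forall>n\<ge>0. n \<in> Lam zs")
  case True then show ?thesis using Lam_nonneg by auto
next
  case False
  then obtain n0 where n0: "n0 \<ge> 0" "n0 \<notin> Lam zs" by auto
  define Y1 where "Y1 = (LEAST k::nat. int k \<notin> Lam zs)"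
  have ex: "int (nat n0) \<notin> Lam zs" using n0 by simp
  have Y1n: "int Y1 \<notin> Lam zs" unfolding Y1_def by (rule LeastI[of "\<lambda>k. int k \<notin> Lam zs" "nat n0", OF ex])
  have Y1l: "\<And>k. k < Y1 \<Longrightarrow> int k \<in> Lam zs" unfolding Y1_def using not_less_Least by blast
  have Y1p: "Y1 \<ge> 1" using Y1n zero_Lam by (cases Y1) auto
  define Y where "Y = int Y1 - 1"
  have low: "\<forall>n. 0 \<le> n \<and> n \<le> Y \<longrightarrow> n \<in> Lam zs"
  proof (intro allI impI)
    fix n :: int assume "0 \<le> n \<and> n \<le> Y"
    then have "nat n < Y1" unfolding Y_def by auto
    then have "int (nat n) \<in> Lam zs" by (rule Y1l)
    then show "n \<in> Lam zs" using \<open>0 \<le> n \<and> n \<le> Y\<close> by simp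
  qed
  have gY: "sig w G \<le> Y" if "feas zs G" "good G" for G
  proof (rule ccontr)
    assume "\<not> sig w G \<le> Y"
    then have "int Y1 \<le> sig w G" unfolding Y_def by simp
    moreover have "sig w G = int (nat (sig w G))" using mn[OF that(1)] by simp
    ultimately have "int Y1 \<in> Lam zs" using good_all[OF that, of "nat (sig w G)" Y1] by linarith
    with Y1n show False by simp
  qed
  have hY: "sig w G \<le> Y" if "feas zs G" "\<forall>i\<le>p. G i = 0" for G
  proof (rule ccontr)
    assume "\<not> sig w G \<le> Y"
    then have "int Y1 \<le> sig w G" unfolding Y_def by simp
    moreover have "sig w G = int (nat (sig w G))" using mn[OF that(1)] by simp
    ultimately have "int Y1 \<in> Lam zs" using hz[OF that, of "nat (sig w G)" Y1] by linarith
    with Y1n show False by simp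
  qed
  have up: "\<forall>l\<in>Lam zs. 0 \<le> l \<and> l \<le> Y + K1"
  proof
    fix l assume "l \<in> Lam zs"
    then obtain F where F: "feas zs F" "l = sig w F" unfolding Lam_def by auto
    have "sig w F \<le> Y + K1"
    proof (cases "F p \<ge> a * W")
      case True
      have "feas zs (VV F)" "good (VV F)" "sig w F - sig w (VV F) \<le> K1"
        using VV_feas_good[OF F(1) True] by auto
      then have "sig w (VV F) \<le> Y" "sig w F - sig w (VV F) \<le> K1" using gY by auto
      then show ?thesis by linarith
    next
      case False
      then have "F p < a * W" by simp
      have "feas zs (ZZ F)" "\<forall>i\<le>p. ZZ F i = 0" "sig w F - sig w (ZZ F) \<le> K1"
        using ZZ_feas[OF F(1) \<open>F p < a * W\<close>] by auto
      then have "sig w (ZZ F) \<le> Y" "sig w F - sig w (ZZ F) \<le> K1" using hY by auto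
      then show ?thesis by linarith
    qed
    then show "0 \<le> l \<and> l \<le> Y + K1" using F mn by auto
  qed
  have "Y \<ge> 0" using Y1p unfolding Y_def by simp
  then show ?thesis using low up by blast
qed

end

context sysc begin
lemma K1_nonneg: "K1 \<ge> 0"
  unfolding K1_def using w1 Cd_nonneg by (intro sum_nonneg) (auto intro: mult_nonneg_nonneg order_trans[OF zero_le_one])

theorem core_gt: "\<exists>K\<ge>0. \<forall>zs. (\<forall>i. zs i \<ge> 0) \<longrightarrow> (\<forall>F. feas zs F \<longrightarrow> sig w F \<ge> 0) \<longrightarrow>
   ((\<exists>Y\<ge>0. (\<forall>n. 0 \<le> n \<and> n \<le> Y \<longrightarrow> n \<in> Lam zs) \<and> (\<forall>l\<in>Lam zs. 0 \<le> l \<and> l \<le> Y + K))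
   \<or> ((\<forall>n\<ge>0. n \<in> Lam zs) \<and> (\<forall>l\<in>Lam zs. 0 \<le> l)))"
  using sysz.main_gt[of A B w p a b] K1_nonneg sysz_axioms_def sysz_def sysc_axioms by blast

end


definition zz2 :: "(nat \<Rightarrow> int) \<Rightarrow> (nat \<Rightarrow> int) \<Rightarrow> (nat \<Rightarrow> int) \<Rightarrow> (nat \<Rightarrow> int) \<Rightarrow> nat \<Rightarrow> int" where
  "zz2 A B zs G i = zs i - A i * G i + pb B G i"

lemma zz2_upd: "zz2 A B zs (G(j := v)) i = zz2 A B zs G i - (if i = j then A j * (v - G j) else 0)
    + (if i = Suc j then B j * (v - G j) else 0)"
  unfolding zz2_def pb_def by (auto simp: algebra_simps)

locale sysl = sysc +
  assumes ba: "b > a" and Bb: "\<And>i. B i \<ge> b" and p1: "p \<ge> 1"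
begin

definition q :: nat where "q = p - 1"
lemma Suc_q: "Suc q = p" using p1 by (simp add: q_def)

definition feas2 :: "(nat \<Rightarrow> int) \<Rightarrow> (nat \<Rightarrow> int) \<Rightarrow> bool" where
  "feas2 zs G \<longleftrightarrow> fs G \<and> (\<forall>i. zz2 A B zs G i \<ge> 0)"

definition Lam2 :: "(nat \<Rightarrow> int) \<Rightarrow> int set" where
  "Lam2 zs = sig w ` {G. feas2 zs G}"

lemma feas2_zero: "(\<And>i. zs i \<ge> 0) \<Longrightarrow> feas2 zs (\<lambda>i. 0)"
  unfolding feas2_def zz2_def pb_def using fs_zero by auto

lemma feas2_upd: "feas2 zs G \<Longrightarrow> (\<And>i. zz2 A B zs (G(j:=v)) i \<ge> 0) \<Longrightarrow> feas2 zs (G(j := v))"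
  unfolding feas2_def using fs_upd by auto

lemma feas2_minI: assumes "feas2 zs F" "feas2 zs G" shows "feas2 zs (\<lambda>i. min (F i) (G i))"
  unfolding feas2_def
proof (intro conjI allI)
  show "fs (\<lambda>i. min (F i) (G i))" using assms fs_min unfolding feas2_def by auto
  fix i
  have zF: "zz2 A B zs F i \<ge> 0" and zG: "zz2 A B zs G i \<ge> 0" using assms unfolding feas2_def by auto
  have AF: "A i * min (F i) (G i) \<le> A i * F i" and AG: "A i * min (F i) (G i) \<le> A i * G i"
    using A1[of i] by (auto intro: mult_left_mono)
  show "zz2 A B zs (\<lambda>i. min (F i) (G i)) i \<ge> 0"
  proof (cases i)
    case 0 then show ?thesis using zF AF by (simp add: zz2_def pb_def)
  next
    case (Suc m)
    show ?thesis
    proof (cases "F m \<le> G m")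
      case True then show ?thesis using zF AF Suc by (simp add: zz2_def pb_def)
    next
      case False then show ?thesis using zG AG Suc by (simp add: zz2_def pb_def)
    qed
  qed
qed

primrec Cn :: "nat \<Rightarrow> int" where
  "Cn 0 = 1"
| "Cn (Suc k) = A (q - k) * Cn k"

lemma Cn_nonneg: "Cn k \<ge> 0"
  by (induction k) (use A1 in \<open>auto intro: mult_nonneg_nonneg order_trans[OF zero_le_one]\<close>)

definition K2 :: int where "K2 = (\<Sum>i\<le>q. w i * Cn (q - i))"

lemma K2_nonneg: "K2 \<ge> 0"
  unfolding K2_def using w1 Cn_nonneg by (intro sum_nonneg) (auto intro: mult_nonneg_nonneg order_trans[OF zero_le_one])

end

locale sysl_z = sysl +
  fixes zs :: "nat \<Rightarrow> int"
  assumes zs0: "\<And>i. zs i \<ge> 0"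
    and mn2: "\<And>G. feas2 zs G \<Longrightarrow> sig w G \<ge> 0"
begin

lemma nonneg2: assumes "feas2 zs F" shows "F i \<ge> 0"
proof (rule ccontr)
  assume neg: "\<not> F i \<ge> 0"
  define G where "G = (\<lambda>i. min (F i) 0)"
  have fG: "feas2 zs G" unfolding G_def using feas2_minI[OF assms feas2_zero[OF zs0]] by simp
  obtain M where M: "\<forall>j\<ge>M. F j = 0" using assms unfolding feas2_def fs_def by auto
  have iM: "i < M"
  proof (rule ccontr)
    assume "\<not> i < M" then have "F i = 0" using M by auto
    with neg show False by simp
  qed
  have MG: "\<forall>j\<ge>M. G j = 0" using M by (simp add: G_def)
  have "sig w G = (\<Sum>j<M. w j * G j)" by (rule sig_sum[OF MG])
  also have "\<dots> = w i * G i + (\<Sum>j\<in>{..<M} - {i}. w j * G j)"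
    using iM by (simp add: sum.remove)
  also have "(\<Sum>j\<in>{..<M} - {i}. w j * G j) \<le> 0"
  proof (rule sum_nonpos)
    fix j have "w j \<ge> 0" using w1[of j] by simp
    moreover have "G j \<le> 0" by (simp add: G_def)
    ultimately show "w j * G j \<le> 0" by (rule mult_nonneg_nonpos)
  qed
  also have "w i * G i < 0" using neg w1[of i] by (simp add: G_def mult_pos_neg)
  finally have "sig w G < 0" by simp
  with mn2[OF fG] show False by simp
qed

definition good2 :: "(nat \<Rightarrow> int) \<Rightarrow> bool" where
  "good2 G \<longleftrightarrow> (\<exists>j\<ge>p. zz2 A B zs G j \<ge> a)"

lemma push: assumes "feas2 zs G" "j \<ge> p" "zz2 A B zs G j \<ge> a"
  shows "\<exists>G'. feas2 zs G' \<and> sig w G' = sig w G + int t \<and> zz2 A B zs G' (j + t) \<ge> a"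
proof (induction t)
  case 0 then show ?case using assms by auto
next
  case (Suc t)
  then obtain G' where G': "feas2 zs G'" "sig w G' = sig w G + int t" "zz2 A B zs G' (j + t) \<ge> a" by auto
  define G'' where "G'' = G'(j + t := G' (j + t) + 1)"
  have zG': "\<And>i. zz2 A B zs G' i \<ge> 0" using G'(1) feas2_def by auto
  have Aj: "A (j + t) = a" "B (j + t) = b" "w (j + t) = 1" using assms(2) tA tB tw by auto
  have f'': "feas2 zs G''" unfolding G''_def
  proof (rule feas2_upd[OF G'(1)])
    fix i
    show "zz2 A B zs (G'(j + t := G' (j + t) + 1)) i \<ge> 0"
    proof (cases "i = j + t")
      case True then show ?thesis using G'(3) Aj by (simp add: zz2_upd)
    next
      case False then show ?thesis using zG'[of i] Aj b1 by (cases "i = Suc (j + t)") (auto simp: zz2_upd)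
    qed
  qed
  have s'': "sig w G'' = sig w G + int (Suc t)"
    unfolding G''_def using sig_upd[of G' w "j + t"] G'(1,2) Aj unfolding feas2_def by simp
  have "zz2 A B zs G'' (j + Suc t) = zz2 A B zs G' (Suc (j + t)) + b"
    unfolding G''_def using Aj by (simp add: zz2_upd)
  then have "zz2 A B zs G'' (j + Suc t) \<ge> a" using zG'[of "Suc (j+t)"] ba by simp
  then show ?case using f'' s'' by blast
qed

lemma bad_tail: assumes "feas2 zs G" "\<not> good2 G" "j \<ge> p" shows "G j = 0"
proof (rule ccontr)
  assume "G j \<noteq> 0"
  define S where "S = {l. l \<ge> p \<and> G l \<noteq> 0}"
  have fin: "finite S" unfolding S_def using fs_finite[of G] assms(1) feas2_def
    by (auto intro: finite_subset)
  have ne: "j \<in> S" using \<open>G j \<noteq> 0\<close> assms(3) by (simp add: S_def)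
  define l0 where "l0 = Max S"
  have l0: "l0 \<in> S" unfolding l0_def using fin ne by (intro Max_in) auto
  have l0m: "G (Suc l0) = 0"
  proof (rule ccontr)
    assume "G (Suc l0) \<noteq> 0"
    then have "Suc l0 \<in> S" using l0 by (simp add: S_def)
    then have "Suc l0 \<le> l0" unfolding l0_def by (rule Max_ge[OF fin])
    then show False by simp
  qed
  have gl: "G l0 \<ge> 1" using nonneg2[OF assms(1), of l0] l0 by (simp add: S_def)
  have Bl: "B l0 = b" using l0 tB by (simp add: S_def)
  have "zz2 A B zs G (Suc l0) = zs (Suc l0) + b * G l0" using l0m Bl by (simp add: zz2_def pb_def)
  also have "\<dots> \<ge> b"
  proof -
    have "b * 1 \<le> b * G l0" using gl b1 by (intro mult_left_mono) auto
    then show ?thesis using zs0[of "Suc l0"] by simp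
  qed
  finally have "zz2 A B zs G (Suc l0) \<ge> a" using ba by simp
  moreover have "Suc l0 \<ge> p" using l0 by (simp add: S_def)
  ultimately have "good2 G" unfolding good2_def by blast
  with assms(2) show False by simp
qed

lemma good_from_q: assumes "feas2 zs G" "G q \<ge> 1" shows "good2 G"
proof (rule ccontr)
  assume ng: "\<not> good2 G"
  have "G p = 0" by (rule bad_tail[OF assms(1) ng]) simp
  then have "zz2 A B zs G p = zs p + B q * G q" using Suc_q by (auto simp: zz2_def pb_def q_def)
  also have "\<dots> \<ge> B q"
  proof -
    have "B q * 1 \<le> B q * G q" using assms(2) B1[of q] by (intro mult_left_mono) auto
    then show ?thesis using zs0[of p] by simp
  qed
  finally have "zz2 A B zs G p \<ge> B q" .
  moreover have "B q \<ge> a" using Bb[of q] ba by simp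
  ultimately have "good2 G" unfolding good2_def by auto
  with ng show False by simp
qed


lemma good_q: assumes "feas2 zs G" "good2 G" "\<not> good2 (\<lambda>i. 0)" shows "G q \<ge> 1"
proof (rule ccontr)
  assume "\<not> G q \<ge> 1"
  then have Gq: "G q = 0" using nonneg2[OF assms(1), of q] by simp
  have z0: "zz2 A B zs (\<lambda>i. 0) j = zs j" for j by (simp add: zz2_def pb_def)
  obtain j where j: "j \<ge> p" "zz2 A B zs G j \<ge> a" using assms(2) good2_def by auto
  show False
  proof (cases "\<forall>l\<ge>p. G l = 0")
    case True
    have "j - 1 = q \<or> j - 1 \<ge> p" using j(1) Suc_q by arith
    then have "G (j - 1) = 0" using True Gq by auto
    moreover have "G j = 0" using True j(1) by simp
    moreover have "j \<noteq> 0" using j(1) p1 by simp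
    ultimately have "zz2 A B zs G j = zs j" by (simp add: zz2_def pb_def)
    then have "good2 (\<lambda>i. 0)" using j z0 unfolding good2_def by auto
    with assms(3) show False by simp
  next
    case False
    then obtain l where l: "l \<ge> p" "G l \<noteq> 0" by auto
    define l0 where "l0 = (LEAST l. p \<le> l \<and> G l \<noteq> 0)"
    have l0: "p \<le> l0" "G l0 \<noteq> 0" using LeastI[of "\<lambda>l. p \<le> l \<and> G l \<noteq> 0" l] l unfolding l0_def by auto
    have l0m: "\<And>m. p \<le> m \<Longrightarrow> m < l0 \<Longrightarrow> G m = 0" unfolding l0_def using not_less_Least by blast
    have "G (l0 - 1) = 0"
    proof (cases "l0 = p")
      case True then have "l0 - 1 = q" using Suc_q by simp
      then show ?thesis using Gq by simp
    next
      case False then show ?thesis using l0m[of "l0 - 1"] l0(1) by simp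
    qed
    moreover have "l0 \<noteq> 0" using l0(1) p1 by simp
    ultimately have "zz2 A B zs G l0 = zs l0 - a * G l0" using tA[OF l0(1)] by (simp add: zz2_def pb_def)
    moreover have "zz2 A B zs G l0 \<ge> 0" using assms(1) feas2_def by auto
    moreover have "G l0 \<ge> 1" using nonneg2[OF assms(1), of l0] l0(2) by simp
    moreover have "a * 1 \<le> a * G l0" using a1 \<open>G l0 \<ge> 1\<close> by (intro mult_left_mono) auto
    ultimately have "zs l0 \<ge> a" by simp
    then have "good2 (\<lambda>i. 0)" using l0(1) z0 unfolding good2_def by auto
    with assms(3) show False by simp
  qed
qed

primrec Nd :: "nat \<Rightarrow> int" where
  "Nd 0 = 1"
| "Nd (Suc k) = (max 0 (A (q - k) * Nd k - zs (q - k)) + B (q - Suc k) - 1) div B (q - Suc k)"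

lemma Nd_props: "0 \<le> Nd k \<and> Nd k \<le> Cn k"
proof (induction k)
  case 0 then show ?case by simp
next
  case (Suc k)
  define X where "X = max 0 (A (q - k) * Nd k - zs (q - k))"
  have X0: "X \<ge> 0" unfolding X_def by simp
  have XA: "X \<le> A (q - k) * Nd k" unfolding X_def using zs0[of "q-k"] Suc A1[of "q-k"] by simp
  have "A (q - k) * Nd k \<le> A (q - k) * Cn k" using Suc A1[of "q-k"] by (intro mult_left_mono) auto
  moreover have "(X + B (q - Suc k) - 1) div B (q - Suc k) \<le> X"
    using X0 B1[of "q - Suc k"] by (intro ceil_le) (auto intro: order_trans[of X "1*X"] mult_right_mono)
  moreover have "(X + B (q - Suc k) - 1) div B (q - Suc k) \<ge> 0"
    using X0 B1[of "q - Suc k"] pos_imp_zdiv_nonneg_iff by simp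
  ultimately have "Nd (Suc k) \<le> X" "0 \<le> Nd (Suc k)" "X \<le> A (q - k) * Cn k" using XA by (simp_all add: X_def)
  then show ?case by simp
qed

lemma Nd_ceil: "A (q - k) * Nd k - zs (q - k) \<le> B (q - Suc k) * Nd (Suc k)"
proof -
  define X where "X = max 0 (A (q - k) * Nd k - zs (q - k))"
  have "X \<le> B (q - Suc k) * ((X + B (q - Suc k) - 1) div B (q - Suc k))" by (rule ceil_ge[OF B1])
  then show ?thesis by (simp add: X_def)
qed

lemma Nd_le: assumes "feas2 zs G" "G q \<ge> 1" shows "k \<le> q \<Longrightarrow> Nd k \<le> G (q - k)"
proof (induction k)
  case 0 then show ?case using assms by simp
next
  case (Suc k)
  then have IH: "Nd k \<le> G (q - k)" by simp
  have zl: "zz2 A B zs G (q - k) \<ge> 0" using assms feas2_def by auto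
  have pb: "pb B G (q - k) = B (q - Suc k) * G (q - Suc k)"
    using Suc.prems unfolding pb_def by (simp add: Suc_diff_Suc diff_diff_left)
  have "A (q - k) * Nd k \<le> A (q - k) * G (q - k)" using IH A1[of "q-k"] by (intro mult_left_mono) auto
  then have "A (q - k) * Nd k - zs (q - k) \<le> B (q - Suc k) * G (q - Suc k)"
    using zl pb by (simp add: zz2_def)
  moreover have "0 \<le> B (q - Suc k) * G (q - Suc k)"
    using nonneg2[OF assms(1)] B1 by (simp add: mult_nonneg_nonneg order_trans[OF zero_le_one])
  ultimately have "max 0 (A (q - k) * Nd k - zs (q - k)) \<le> B (q - Suc k) * G (q - Suc k)" by simp
  then show ?case by (simp add: ceil_le[OF B1])
qed

definition NN :: "nat \<Rightarrow> int" where "NN i = (if i \<le> q then Nd (q - i) else 0)"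

lemma NN_level: assumes "1 \<le> l" "l \<le> q" shows "zs l - A l * NN l + B (l - 1) * NN (l - 1) \<ge> 0"
proof -
  have e1: "NN l = Nd (q - l)" using assms by (simp add: NN_def)
  have e2: "q - (l - 1) = Suc (q - l)" using assms by arith
  have e3: "NN (l - 1) = Nd (Suc (q - l))" using assms e2 by (simp add: NN_def)
  have e4: "q - (q - l) = l" "q - Suc (q - l) = l - 1" using assms by arith+
  have "A (q - (q - l)) * Nd (q - l) - zs (q - (q - l)) \<le> B (q - Suc (q - l)) * Nd (Suc (q - l))"
    by (rule Nd_ceil)
  then show ?thesis unfolding e4 e1 e3 by linarith
qed

lemma NN_nonneg: "NN i \<ge> 0" using Nd_props by (simp add: NN_def)

lemma NN_feas: assumes "feas2 zs G" "G q \<ge> 1" shows "feas2 zs NN \<and> good2 NN \<and> sig w NN \<le> K2"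
proof -
  have NNz: "\<forall>i\<ge>p. NN i = 0" using Suc_q by (auto simp: NN_def)
  have fsN: "fs NN" unfolding fs_def using NNz by blast
  have pq: "p - 1 = q" using Suc_q by simp
  have zp: "zz2 A B zs NN p = zs p + B q" using Suc_q pq by (auto simp: zz2_def pb_def NN_def)
  have fN: "feas2 zs NN" unfolding feas2_def
  proof (intro conjI allI fsN)
    fix l
    show "zz2 A B zs NN l \<ge> 0"
    proof (cases "l = 0")
      case True
      have "NN 0 \<le> G 0" using Nd_le[OF assms, of q] by (simp add: NN_def)
      then have "A 0 * NN 0 \<le> A 0 * G 0" using A1[of 0] by (intro mult_left_mono) auto
      moreover have "zz2 A B zs G 0 \<ge> 0" using assms feas2_def by auto
      ultimately show ?thesis using True by (simp add: zz2_def pb_def)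
    next
      case False
      show ?thesis
      proof (cases "l \<le> q")
        case True then show ?thesis using NN_level[of l] False by (simp add: zz2_def pb_def)
      next
        case lq: False
        show ?thesis
        proof (cases "l = p")
          case True then show ?thesis using zp zs0[of p] B1[of q] by simp
        next
          case False
          then have "l - 1 > q" using lq Suc_q by auto
          then show ?thesis using lq zs0[of l] \<open>l \<noteq> 0\<close> by (simp add: zz2_def pb_def NN_def)
        qed
      qed
    qed
  qed
  have gN: "good2 NN"
  proof -
    have "zz2 A B zs NN p \<ge> a" using zp zs0[of p] Bb[of q] ba by simp
    then show ?thesis unfolding good2_def by auto
  qed
  have "sig w NN = (\<Sum>i<p. w i * NN i)" by (rule sig_sum[OF NNz])
  also have "\<dots> = (\<Sum>i\<le>q. w i * NN i)" using Suc_q lessThan_Suc_atMost by metis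
  also have "\<dots> \<le> K2" unfolding K2_def
  proof (rule sum_mono)
    fix i assume "i \<in> {..q}"
    then have "NN i \<le> Cn (q - i)" using Nd_props by (simp add: NN_def)
    then show "w i * NN i \<le> w i * Cn (q - i)" using w1[of i] by (intro mult_left_mono) auto
  qed
  finally show ?thesis using fN gN by simp
qed

lemma join: assumes "feas2 zs G" "i \<le> q" "G i \<ge> NN i" shows "\<exists>G'. feas2 zs G' \<and> G' q \<ge> 1"
proof -
  define G' where "G' = (\<lambda>j. if i < j \<and> j \<le> q then max (G j) (NN j) else G j)"
  have zG: "\<And>l. zz2 A B zs G l \<ge> 0" using assms(1) feas2_def by auto
  have fsG: "fs G" using assms(1) feas2_def by auto
  have fsG': "fs G'"
  proof -
    obtain M where "\<forall>j\<ge>M. G j = 0" using fsG fs_def by auto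
    then have "\<forall>j\<ge>max M (Suc q). G' j = 0" by (auto simp: G'_def)
    then show ?thesis unfolding fs_def by blast
  qed
  have Gge: "G' j \<ge> G j" for j by (auto simp: G'_def)
  have zz2e: "zz2 A B zs H l = zs l - A l * H l + B (l - 1) * H (l - 1)" if "l \<ge> 1" for H l
    using that by (simp add: zz2_def pb_def)
  have fG': "feas2 zs G'" unfolding feas2_def
  proof (intro conjI allI fsG')
    fix l
    show "zz2 A B zs G' l \<ge> 0"
    proof (cases "l = 0")
      case True then show ?thesis using zG[of 0] by (simp add: zz2_def pb_def G'_def)
    next
      case l0: False
      then have l1: "l \<ge> 1" by simp
      show ?thesis
      proof (cases "i < l \<and> l \<le> q")
        case True
        have m1: "G' (l - 1) \<ge> NN (l - 1)"
        proof (cases "i < l - 1")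
          case True then show ?thesis using \<open>i < l \<and> l \<le> q\<close> by (auto simp: G'_def)
        next
          case False then have "l - 1 = i" using \<open>i < l \<and> l \<le> q\<close> by arith
          then show ?thesis using assms(3) by (simp add: G'_def)
        qed
        have Bm: "B (l - 1) * G' (l - 1) \<ge> B (l - 1) * G (l - 1)" "B (l - 1) * G' (l - 1) \<ge> B (l - 1) * NN (l - 1)"
          using Gge m1 B1[of "l - 1"] by (auto intro: mult_left_mono)
        show ?thesis
        proof (cases "G l \<ge> NN l")
          case True
          then have "G' l = G l" using \<open>i < l \<and> l \<le> q\<close> by (simp add: G'_def)
          then have "A l * G' l = A l * G l" by simp
          then show ?thesis using zG[of l] Bm(1) zz2e[OF l1, of G] zz2e[OF l1, of G'] by linarith
        next
          case False
          then have "G' l = NN l" using \<open>i < l \<and> l \<le> q\<close> by (simp add: G'_def)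
          moreover have "l \<le> q" using True by simp
          moreover have "A l * G' l = A l * NN l" using \<open>G' l = NN l\<close> by simp
          ultimately show ?thesis using NN_level[OF l1] Bm(2) zz2e[OF l1, of G'] by linarith
        qed
      next
        case False
        then have "G' l = G l" unfolding G'_def by auto
        moreover have "B (l - 1) * G' (l - 1) \<ge> B (l - 1) * G (l - 1)"
          using Gge B1[of "l - 1"] by (auto intro: mult_left_mono)
        moreover have "A l * G' l = A l * G l" using \<open>G' l = G l\<close> by simp
        ultimately show ?thesis using zG[of l] zz2e[OF l1, of G] zz2e[OF l1, of G'] by linarith
      qed
    qed
  qed
  have "G' q \<ge> 1"
  proof (cases "i < q")
    case True
    then have "G' q \<ge> NN q" by (simp add: G'_def)
    then show ?thesis by (simp add: NN_def)
  next
    case False then have "i = q" using assms(2) by simp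
    then show ?thesis using assms(3) Gge[of q] by (simp add: NN_def)
  qed
  then show ?thesis using fG' by blast
qed

lemma Lam2_nonneg: "l \<in> Lam2 zs \<Longrightarrow> 0 \<le> l"
  unfolding Lam2_def using mn2 by auto

lemma main_lt:
  "(\<exists>Y. 0 \<le> Y \<and> Y \<le> K2 \<and> (\<forall>n\<ge>Y. n \<in> Lam2 zs) \<and> (\<forall>l\<in>Lam2 zs. 0 \<le> l))
   \<or> (\<forall>l\<in>Lam2 zs. 0 \<le> l \<and> l \<le> K2)"
proof (cases "\<exists>G. feas2 zs G \<and> good2 G")
  case True
  then obtain G where G: "feas2 zs G" "good2 G" by auto
  have allfrom: "\<forall>n\<ge>sig w H. n \<in> Lam2 zs" if H: "feas2 zs H" "good2 H" for H
  proof (intro allI impI)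
    fix n assume n: "n \<ge> sig w H"
    obtain j where j: "j \<ge> p" "zz2 A B zs H j \<ge> a" using H(2) good2_def by auto
    obtain H' where "feas2 zs H'" "sig w H' = sig w H + int (nat (n - sig w H))"
      using push[OF H(1) j, of "nat (n - sig w H)"] by auto
    then have "feas2 zs H'" "sig w H' = n" using n by auto
    then show "n \<in> Lam2 zs" unfolding Lam2_def by (metis (mono_tags) imageI mem_Collect_eq)
  qed
  show ?thesis
  proof (cases "good2 (\<lambda>i. 0)")
    case True
    have "\<forall>n\<ge>0. n \<in> Lam2 zs" using allfrom[OF feas2_zero[OF zs0] True] sig_zero by simp
    then show ?thesis using Lam2_nonneg K2_nonneg by auto
  next
    case False
    have "G q \<ge> 1" by (rule good_q[OF G False])
    then have N: "feas2 zs NN" "good2 NN" "sig w NN \<le> K2" using NN_feas[OF G(1)] by auto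
    have "0 \<le> sig w NN" using mn2[OF N(1)] .
    then show ?thesis using allfrom[OF N(1,2)] N(3) Lam2_nonneg by auto
  qed
next
  case False
  have bnd: "sig w G \<le> K2" if "feas2 zs G" for G
  proof -
    have ng: "\<not> good2 G" using False that by auto
    have lt: "G i \<le> NN i" if iq: "i \<le> q" for i
    proof (rule ccontr)
      assume "\<not> G i \<le> NN i"
      then obtain G' where "feas2 zs G'" "G' q \<ge> 1" using join[OF \<open>feas2 zs G\<close> iq] by auto
      then have "good2 G'" by (rule good_from_q)
      with False \<open>feas2 zs G'\<close> show False by auto
    qed
    have tz: "\<forall>j\<ge>p. G j = 0" using bad_tail[OF that ng] by auto
    have "sig w G = (\<Sum>i<p. w i * G i)" by (rule sig_sum[OF tz])
    also have "\<dots> = (\<Sum>i\<le>q. w i * G i)" using Suc_q lessThan_Suc_atMost by metis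
    also have "\<dots> \<le> K2" unfolding K2_def
    proof (rule sum_mono)
      fix i assume "i \<in> {..q}"
      then have "G i \<le> Cn (q - i)" using lt[of i] Nd_props by (auto simp: NN_def intro: order_trans)
      then show "w i * G i \<le> w i * Cn (q - i)" using w1[of i] by (intro mult_left_mono) auto
    qed
    finally show ?thesis .
  qed
  show ?thesis using bnd Lam2_nonneg unfolding Lam2_def by auto
qed

end

context sysl begin
theorem core_lt: "\<exists>K\<ge>0. \<forall>zs. (\<forall>i. zs i \<ge> 0) \<longrightarrow> (\<forall>G. feas2 zs G \<longrightarrow> sig w G \<ge> 0) \<longrightarrow>
   ((\<exists>Y. 0 \<le> Y \<and> Y \<le> K \<and> (\<forall>n\<ge>Y. n \<in> Lam2 zs) \<and> (\<forall>l\<in>Lam2 zs. 0 \<le> l))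
   \<or> (\<forall>l\<in>Lam2 zs. 0 \<le> l \<and> l \<le> K))"
proof -
  have "\<forall>zs. (\<forall>i. zs i \<ge> 0) \<longrightarrow> (\<forall>G. feas2 zs G \<longrightarrow> sig w G \<ge> 0) \<longrightarrow>
   ((\<exists>Y. 0 \<le> Y \<and> Y \<le> K2 \<and> (\<forall>n\<ge>Y. n \<in> Lam2 zs) \<and> (\<forall>l\<in>Lam2 zs. 0 \<le> l))
   \<or> (\<forall>l\<in>Lam2 zs. 0 \<le> l \<and> l \<le> K2))"
  proof (intro allI impI)
    fix zs :: "nat \<Rightarrow> int" assume "\<forall>i. zs i \<ge> 0" "\<forall>G. feas2 zs G \<longrightarrow> sig w G \<ge> 0"
    then interpret z: sysl_z A B w p a b zs by unfold_locales auto
    show "(\<exists>Y. 0 \<le> Y \<and> Y \<le> K2 \<and> (\<forall>n\<ge>Y. n \<in> Lam2 zs) \<and> (\<forall>l\<in>Lam2 zs. 0 \<le> l))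
   \<or> (\<forall>l\<in>Lam2 zs. 0 \<le> l \<and> l \<le> K2)" by (rule z.main_lt)
  qed
  then show ?thesis using K2_nonneg by blast
qed
end


locale tr =
  fixes a b :: int and e :: "nat \<Rightarrow> nat"
  assumes a1: "a \<ge> 1" and b1: "b \<ge> 1" and cop: "coprime a b" and sm: "strict_mono e"
begin

definition rho :: "nat \<Rightarrow> rat" where "rho i = (of_int a / of_int b) ^ e i"
definition kk :: "nat \<Rightarrow> nat" where "kk i = e (Suc i) - e i"
definition AA :: "nat \<Rightarrow> int" where "AA i = a ^ kk i"
definition BB :: "nat \<Rightarrow> int" where "BB i = b ^ kk i"

lemma kk1: "kk i \<ge> 1"
proof -
  have "e i < e (Suc i)" using sm by (simp add: strict_mono_less)
  then show ?thesis unfolding kk_def by simp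
qed

lemma eSuc: "e (Suc i) = e i + kk i"
  using sm unfolding kk_def strict_mono_def by (metis le_add_diff_inverse less_imp_le lessI)

lemma rho_pos: "rho i > 0" unfolding rho_def using a1 b1 by simp

lemma rel: "of_int (AA i) * rho i = of_int (BB i) * rho (Suc i)"
proof -
  have bnz: "(of_int b :: rat) \<noteq> 0" using b1 by simp
  have "of_int (BB i) * rho (Suc i) = of_int b ^ kk i * ((of_int a / of_int b) ^ e i * (of_int a / of_int b) ^ kk i)"
    unfolding BB_def rho_def eSuc by (simp add: power_add)
  also have "\<dots> = (of_int b ^ kk i * (of_int a / of_int b) ^ kk i) * (of_int a / of_int b) ^ e i"
    by (simp add: algebra_simps)
  also have "of_int b ^ kk i * (of_int a / of_int b) ^ kk i = (of_int a :: rat) ^ kk i"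
    using bnz by (simp add: power_divide)
  finally show ?thesis unfolding AA_def rho_def by simp
qed

lemma rho_scaled: assumes "e i \<le> E"
  shows "rho i * of_int b ^ E = of_int (a ^ e i * b ^ (E - e i))"
proof -
  have bnz: "(of_int b :: rat) \<noteq> 0" using b1 by simp
  have "(of_int b :: rat) ^ E = of_int b ^ e i * of_int b ^ (E - e i)"
    using assms by (simp add: power_add[symmetric])
  then show ?thesis unfolding rho_def using bnz by (simp add: power_divide)
qed

lemma dvd_key: assumes z1: "\<forall>i<k. \<delta> i = 0" and z2: "\<forall>i\<ge>K. \<delta> i = 0"
  and s0: "(\<Sum>i<K. of_int (\<delta> i) * rho i) = 0" and kK: "k < K"
  shows "AA k dvd \<delta> k"
proof -
  define E where "E = e K"
  define T where "T i = \<delta> i * (a ^ e i * b ^ (E - e i))" for i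
  have eiE: "e i \<le> E" if "i < K" for i using that sm unfolding E_def strict_mono_def by (simp add: less_imp_le)
  have "(\<Sum>i<K. of_int (\<delta> i) * rho i) * of_int b ^ E = (\<Sum>i<K. of_int (T i) :: rat)"
    unfolding sum_distrib_right
    by (rule sum.cong) (auto simp: T_def mult.assoc rho_scaled[OF eiE])
  then have "(\<Sum>i<K. of_int (T i) :: rat) = 0" using s0 by simp
  then have sT: "(\<Sum>i<K. T i) = 0" by (metis of_int_eq_0_iff of_int_sum)
  have split: "(\<Sum>i<K. T i) = T k + (\<Sum>i\<in>{Suc k..<K}. T i)"
  proof -
    have "(\<Sum>i<K. T i) = (\<Sum>i\<in>{0..<k}. T i) + (\<Sum>i\<in>{k..<K}. T i)"
      using kK by (simp add: lessThan_atLeast0 sum.atLeastLessThan_concat)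
    moreover have "(\<Sum>i\<in>{0..<k}. T i) = 0" using z1 by (simp add: T_def)
    moreover have "(\<Sum>i\<in>{k..<K}. T i) = T k + (\<Sum>i\<in>{Suc k..<K}. T i)"
      using kK by (rule sum.atLeast_Suc_lessThan)
    ultimately show ?thesis by simp
  qed
  have dv: "a ^ e (Suc k) dvd T i" if "i \<in> {Suc k..<K}" for i
  proof -
    have "e (Suc k) \<le> e i" using that sm unfolding strict_mono_def by (auto simp: le_less)
    then have "a ^ e (Suc k) dvd a ^ e i" by (rule le_imp_power_dvd)
    then show ?thesis unfolding T_def by (simp add: dvd_mult2 dvd_mult)
  qed
  have "a ^ e (Suc k) dvd T k"
  proof -
    have "T k = - (\<Sum>i\<in>{Suc k..<K}. T i)" using sT split by simp
    moreover have "a ^ e (Suc k) dvd (\<Sum>i\<in>{Suc k..<K}. T i)" by (rule dvd_sum) (rule dv)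
    ultimately show ?thesis by simp
  qed
  then have "a ^ e k * a ^ kk k dvd a ^ e k * (\<delta> k * b ^ (E - e k))"
    unfolding T_def eSuc by (simp add: power_add ac_simps)
  then have "a ^ kk k dvd \<delta> k * b ^ (E - e k)" using a1 by (simp add: dvd_mult_cancel_left)
  moreover have "coprime (a ^ kk k) (b ^ (E - e k))" using cop by simp
  ultimately show ?thesis unfolding AA_def using coprime_dvd_mult_left_iff by blast
qed

lemma pb_upd_other: "i \<noteq> Suc k \<Longrightarrow> pb B (F(k := v)) i = pb B F i"
  unfolding pb_def by auto

lemma flow_ex: "\<forall>k K \<delta>. K = k + n \<longrightarrow> (\<forall>i<k. \<delta> i = 0) \<longrightarrow> (\<forall>i\<ge>K. \<delta> i = 0) \<longrightarrow>
   (\<Sum>i<K. of_int (\<delta> i) * rho i) = 0 \<longrightarrow>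
   (\<exists>F. (\<forall>i<k. F i = 0) \<and> (\<forall>i\<ge>K. F i = 0) \<and> (\<forall>i. \<delta> i = AA i * F i - pb BB F i))"
proof (induction n)
  case 0
  show ?case
  proof (intro allI impI)
    fix k K :: nat and \<delta> :: "nat \<Rightarrow> int"
    assume h: "K = k + 0" "\<forall>i<k. \<delta> i = 0" "\<forall>i\<ge>K. \<delta> i = 0"
    then have "\<delta> i = 0" for i by (cases "i < k") auto
    then show "\<exists>F. (\<forall>i<k. F i = 0) \<and> (\<forall>i\<ge>K. F i = 0) \<and> (\<forall>i. \<delta> i = AA i * F i - pb BB F i)"
      by (intro exI[of _ "\<lambda>i. 0"]) (simp add: pb_def)
  qed
next
  case (Suc n)
  show ?case
  proof (intro allI impI)
    fix k K :: nat and \<delta> :: "nat \<Rightarrow> int"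
    assume h: "K = k + Suc n" "\<forall>i<k. \<delta> i = 0" "\<forall>i\<ge>K. \<delta> i = 0" "(\<Sum>i<K. of_int (\<delta> i) * rho i) = 0"
    have kK: "k < K" using h(1) by simp
    have dv: "AA k dvd \<delta> k" by (rule dvd_key[OF h(2,3,4) kK])
    define c where "c = \<delta> k div AA k"
    have dc: "\<delta> k = AA k * c" using dv unfolding c_def by simp
    have c0: "c = 0" if "Suc k = K"
    proof -
      have "(\<Sum>i<K. of_int (\<delta> i) * rho i) = of_int (\<delta> k) * rho k"
      proof -
        have "{..<K} = {..<k} \<union> {k}" using that by auto
        then show ?thesis using h(2) by (simp add: sum.union_disjoint)
      qed
      then have "\<delta> k = 0" using h(4) rho_pos[of k] by simp
      then show ?thesis using dc a1 unfolding AA_def by simp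
    qed
    define \<delta>' where "\<delta>' = \<delta>(k := 0, Suc k := \<delta> (Suc k) + BB k * c)"
    have d'1: "\<forall>i<Suc k. \<delta>' i = 0" using h(2) by (auto simp: \<delta>'_def)
    have d'2: "\<forall>i\<ge>K. \<delta>' i = 0" using h(3) c0 kK by (auto simp: \<delta>'_def)
    have d'e: "\<delta>' i = \<delta> i - (if i = k then AA k * c else 0) + (if i = Suc k then BB k * c else 0)" for i
      using dc by (auto simp: \<delta>'_def)
    have d'3: "(\<Sum>i<K. of_int (\<delta>' i) * rho i) = 0"
    proof -
      have pw: "of_int (\<delta>' i) * rho i = of_int (\<delta> i) * rho i - (if i = k then of_int (AA k * c) * rho k else 0)
          + (if i = Suc k then of_int (BB k * c) * rho (Suc k) else 0)" for i
        unfolding d'e by (auto simp: algebra_simps)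
      have "(\<Sum>i<K. of_int (\<delta>' i) * rho i) = (\<Sum>i<K. of_int (\<delta> i) * rho i)
          - (\<Sum>i<K. (if i = k then of_int (AA k * c) * rho k else 0))
          + (\<Sum>i<K. (if i = Suc k then of_int (BB k * c) * rho (Suc k) else 0))"
        unfolding pw by (simp add: sum.distrib sum_subtractf)
      also have "\<dots> = - of_int (AA k * c) * rho k + (if Suc k < K then of_int (BB k * c) * rho (Suc k) else 0)"
        using h(4) kK by simp
      also have "\<dots> = 0"
      proof (cases "Suc k < K")
        case True then show ?thesis using rel[of k] by (simp add: algebra_simps)
      next
        case False then have "Suc k = K" using kK by simp
        then show ?thesis using c0 by simp
      qed
      finally show ?thesis .
    qed
    obtain F' where F': "\<forall>i<Suc k. F' i = 0" "\<forall>i\<ge>K. F' i = 0" "\<forall>i. \<delta>' i = AA i * F' i - pb BB F' i"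
      using Suc.IH[rule_format, of K "Suc k" \<delta>'] h(1) d'1 d'2 d'3 by auto
    define F where "F = F'(k := c)"
    have "\<forall>i<k. F i = 0" using F'(1) by (simp add: F_def)
    moreover have "\<forall>i\<ge>K. F i = 0" using F'(2) kK by (simp add: F_def)
    moreover have "\<forall>i. \<delta> i = AA i * F i - pb BB F i"
    proof
      fix i
      show "\<delta> i = AA i * F i - pb BB F i"
      proof (cases "i = k")
        case True
        have "pb BB F k = 0" using F'(1) unfolding pb_def F_def by (cases k) auto
        then show ?thesis using True dc by (simp add: F_def)
      next
        case ik: False
        show ?thesis
        proof (cases "i = Suc k")
          case True
          have "\<delta>' (Suc k) = AA (Suc k) * F' (Suc k) - BB k * F' k" using F'(3) by (simp add: pb_def)
          then have "AA (Suc k) * F' (Suc k) = \<delta> (Suc k) + BB k * c" using F'(1) by (simp add: \<delta>'_def)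
          moreover have "pb BB F (Suc k) = BB k * c" by (simp add: pb_def F_def)
          ultimately show ?thesis using True by (simp add: F_def)
        next
          case False
          have "pb BB F i = pb BB F' i" unfolding F_def using False by (rule pb_upd_other)
          moreover have "\<delta>' i = \<delta> i" using ik False by (simp add: \<delta>'_def)
          ultimately show ?thesis using F'(3) ik by (simp add: F_def)
        qed
      qed
    qed
    ultimately show "\<exists>F. (\<forall>i<k. F i = 0) \<and> (\<forall>i\<ge>K. F i = 0) \<and> (\<forall>i. \<delta> i = AA i * F i - pb BB F i)"
      by blast
  qed
qed

lemma tele_val: assumes "\<forall>i\<ge>M. F i = 0"
  shows "(\<Sum>i<Suc M. of_int (AA i * F i - pb BB F i) * rho i) = 0"
proof -
  have s1: "(\<Sum>i<Suc M. of_int (pb BB F i) * rho i) = (\<Sum>i<M. of_int (BB i * F i) * rho (Suc i))"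
    unfolding sum.lessThan_Suc_shift by (simp add: pb_def)
  have s2: "(\<Sum>i<Suc M. of_int (AA i * F i) * rho i) = (\<Sum>i<M. of_int (AA i * F i) * rho i)"
    using assms by simp
  have "(\<Sum>i<Suc M. of_int (AA i * F i - pb BB F i) * rho i)
      = (\<Sum>i<Suc M. of_int (AA i * F i) * rho i) - (\<Sum>i<Suc M. of_int (pb BB F i) * rho i)"
    by (simp add: sum_subtractf algebra_simps)
  also have "\<dots> = (\<Sum>i<M. of_int (F i) * (of_int (AA i) * rho i - of_int (BB i) * rho (Suc i)))"
    unfolding s1 s2 by (simp add: sum_subtractf algebra_simps)
  also have "\<dots> = 0" by (simp add: rel)
  finally show ?thesis .
qed

lemma tele_len: assumes "\<forall>i\<ge>M. F i = 0"
  shows "(\<Sum>i<Suc M. AA i * F i - pb BB F i) = (\<Sum>i<M. (AA i - BB i) * F i)"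
proof -
  have s1: "(\<Sum>i<Suc M. pb BB F i) = (\<Sum>i<M. BB i * F i)"
    unfolding sum.lessThan_Suc_shift by (simp add: pb_def)
  have s2: "(\<Sum>i<Suc M. AA i * F i) = (\<Sum>i<M. AA i * F i)"
    using assms by simp
  show ?thesis unfolding sum_subtractf s1 s2 by (simp add: sum_subtractf algebra_simps)
qed

end


lemma gm_iff: "x \<in> gen_monoid G \<longleftrightarrow> (\<exists>m. set_mset m \<subseteq> G \<and> sum_mset m = x)"
  unfolding gen_monoid_def by auto

lemma gm_add: "x \<in> gen_monoid G \<Longrightarrow> y \<in> gen_monoid G \<Longrightarrow> x + y \<in> gen_monoid G"
  unfolding gm_iff by (metis le_sup_iff set_mset_union sum_mset.union)

lemma gm_rep: "g \<in> G \<Longrightarrow> of_nat n * g \<in> gen_monoid G"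
  unfolding gm_iff by (intro exI[of _ "replicate_mset n g"]) auto

lemma gm_gen: "g \<in> G \<Longrightarrow> g \<in> gen_monoid G"
  using gm_rep[of g G 1] by simp

lemma sum_mset_pos: fixes m :: "rat multiset"
  assumes "\<forall>g\<in>set_mset m. g > 0" "m \<noteq> {#}" shows "sum_mset m > 0"
  using assms
proof (induction m)
  case empty then show ?case by simp
next
  case (add x m)
  then show ?case by (cases "m = {#}") (auto intro: add_pos_pos)
qed

lemma atoms_sub: assumes "\<forall>g\<in>G. g > (0::rat)" shows "atoms (gen_monoid G) \<subseteq> G"
proof
  fix y assume y: "y \<in> atoms (gen_monoid G)"
  then have yS: "y \<in> gen_monoid G" and y0: "y \<noteq> 0"
    and ind: "\<forall>u\<in>gen_monoid G. \<forall>v\<in>gen_monoid G. y = u + v \<longrightarrow> u = 0 \<or> v = 0"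
    unfolding atoms_def by auto
  obtain m where m: "set_mset m \<subseteq> G" "sum_mset m = y" using yS gm_iff by auto
  have "m \<noteq> {#}" using m y0 by auto
  then obtain g m' where gm: "m = add_mset g m'" by (metis multiset_cases)
  have gG: "g \<in> G" using m gm by auto
  have m'G: "set_mset m' \<subseteq> G" using m gm by auto
  have "y = g + sum_mset m'" using m gm by simp
  moreover have "g \<in> gen_monoid G" using gG by (rule gm_gen)
  moreover have "sum_mset m' \<in> gen_monoid G" using m'G gm_iff by auto
  ultimately have "g = 0 \<or> sum_mset m' = 0" using ind by blast
  moreover have "g > 0" using gG assms by auto
  ultimately have "sum_mset m' = 0" by simp
  then show "y \<in> G" using \<open>y = g + sum_mset m'\<close> gG by simp
qed

lemma split_ge2: assumes "u \<in> gen_monoid G" "v \<in> gen_monoid G" "u \<noteq> 0" "v \<noteq> 0"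
  shows "\<exists>m. set_mset m \<subseteq> G \<and> sum_mset m = u + v \<and> size m \<ge> 2"
proof -
  obtain m1 where m1: "set_mset m1 \<subseteq> G" "sum_mset m1 = u" using assms(1) gm_iff by auto
  obtain m2 where m2: "set_mset m2 \<subseteq> G" "sum_mset m2 = v" using assms(2) gm_iff by auto
  have "m1 \<noteq> {#}" "m2 \<noteq> {#}" using m1 m2 assms(3,4) by auto
  then have "size m1 \<ge> 1" "size m2 \<ge> 1" by (simp_all add: Suc_le_eq nonempty_has_size)
  then show ?thesis using m1 m2 by (intro exI[of _ "m1 + m2"]) auto
qed

lemma AAP_I: "L = (\<lambda>z. y + z) ` (L1 \<union> Ls \<union> L2) \<Longrightarrow> (\<forall>z\<in>L. d dvd (z - y)) \<Longrightarrow> L1 \<subseteq> {- int B .. -1} \<Longrightarrow>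
   ((Ls = {d * int k | k. True} \<and> L2 = {}) \<or> (\<exists>n\<ge>1. Ls = {d * int k | k. k < n} \<and> L2 \<subseteq> {Max Ls + 1 .. Max Ls + int B}))
   \<Longrightarrow> AAP d B L"
  unfolding AAP_def by blast

lemma AAP_single: "AAP d B {y}"
proof (rule AAP_I[of _ y "{}" "{d * int k | k. k < 1}" "{}"])
  have Ls: "{d * int k | k. k < (1::nat)} = {0}" by auto
  show "{y} = (\<lambda>z. y + z) ` ({} \<union> {d * int k | k. k < 1} \<union> {})" unfolding Ls by simp
  show "\<forall>z\<in>{y}. d dvd z - y" by simp
  show "{} \<subseteq> {- int B..-1}" by simp
  show "({d * int k | k. k < 1} = {d * int k | k. True} \<and> {} = {}) \<or>
     (\<exists>n\<ge>1. {d * int k | k. k < 1} = {d * int k | k. k < n} \<and> {} \<subseteq> {Max {d * int k | k. k < 1} + 1..Max {d * int k | k. k < 1} + int B})"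
    by (intro disjI2 exI[of _ 1]) auto
qed

lemma sum_ones: fixes m :: "rat multiset" shows "set_mset m \<subseteq> {1} \<Longrightarrow> sum_mset m = of_nat (size m)"
  by (induction m) auto

lemma Nats_sum_mset: fixes m :: "rat multiset" shows "set_mset m \<subseteq> \<nat> \<Longrightarrow> sum_mset m \<in> \<nat>"
  by (induction m) auto

lemma caseI:
  fixes r :: rat and N :: "nat set" and a :: int
  assumes NM: "numerical_monoid N" and ra: "r = of_int a" and a2: "a \<ge> 2"
  shows "\<forall>x\<in>exp_puiseux r N. AAP d 0 (int ` lengths (exp_puiseux r N) x)"
proof
  define G where "G = {r ^ k | k. k \<in> N}"
  define S where "S = exp_puiseux r N"
  have SG: "S = gen_monoid G" unfolding S_def G_def exp_puiseux_def by simp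
  have N0: "0 \<in> N" using NM numerical_monoid_def by auto
  have rN: "r \<in> \<nat>"
  proof -
    have "r = of_nat (nat a)" using ra a2 by simp
    then show ?thesis by simp
  qed
  have GN: "G \<subseteq> \<nat>"
  proof
    fix g assume "g \<in> G"
    then obtain k where "g = r ^ k" unfolding G_def by blast
    then have "g = of_nat (nat a ^ k)" using ra a2 by (simp add: of_nat_power)
    then show "g \<in> \<nat>" by (metis of_nat_in_Nats)
  qed
  have SN: "y \<in> \<nat>" if yS: "y \<in> S" for y
  proof -
    obtain m where "set_mset m \<subseteq> G" "sum_mset m = y" using yS SG gm_iff by auto
    then show ?thesis using GN Nats_sum_mset by blast
  qed
  have oneG: "1 \<in> G" unfolding G_def using N0 by (auto intro!: exI[of _ 0])
  have natS: "of_nat n \<in> S" for n using gm_rep[OF oneG, of n] SG by simp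
  have atoms1: "atoms S = {1}"
  proof
    show "atoms S \<subseteq> {1}"
    proof
      fix y assume y: "y \<in> atoms S"
      then have yS: "y \<in> S" and y0: "y \<noteq> 0" unfolding atoms_def by auto
      have ind: "\<forall>u\<in>S. \<forall>v\<in>S. y = u + v \<longrightarrow> u = 0 \<or> v = 0" using y unfolding atoms_def by blast
      obtain n where n: "y = of_nat n" using SN[OF yS] Nats_cases by blast
      have "n \<ge> 1" using n y0 by (cases n) auto
      show "y \<in> {1}"
      proof (rule ccontr)
        assume "y \<notin> {1}"
        then have n2: "n \<ge> 2" using n \<open>n \<ge> 1\<close> by (cases n) auto
        then have "y = 1 + of_nat (n - 1)" using n by (simp add: of_nat_diff)
        moreover have "(1::rat) \<in> S" using natS[of 1] by simp
        moreover have "of_nat (n - 1) \<in> S" by (rule natS)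
        ultimately have "(1::rat) = 0 \<or> of_nat (n - 1) = (0::rat)" using ind by blast
        then show False using n2 by simp
      qed
    qed
    show "{1} \<subseteq> atoms S"
    proof -
      have "(1::rat) \<in> S" using natS[of 1] by simp
      moreover have "\<forall>u\<in>S. \<forall>v\<in>S. 1 = u + v \<longrightarrow> u = 0 \<or> v = 0"
      proof (intro ballI impI)
        fix u v assume uv: "u \<in> S" "v \<in> S" "1 = u + v"
        obtain i where i: "u = of_nat i" using SN[OF uv(1)] Nats_cases by blast
        obtain j where j: "v = of_nat j" using SN[OF uv(2)] Nats_cases by blast
        have "(1::rat) = of_nat (i + j)" using uv(3) i j by simp
        then have "i + j = 1" by (metis of_nat_1 of_nat_eq_iff)
        then show "u = 0 \<or> v = 0" using i j by (cases i) auto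
      qed
      ultimately show ?thesis unfolding atoms_def by auto
    qed
  qed
  fix x assume "x \<in> exp_puiseux r N"
  then have "x \<in> S" by (simp add: S_def)
  then obtain n0 where n0: "x = of_nat n0" using SN Nats_cases by blast
  have "lengths S x = {n0}"
  proof
    show "lengths S x \<subseteq> {n0}"
    proof
      fix l assume "l \<in> lengths S x"
      then obtain m where m: "l = size m" "set_mset m \<subseteq> atoms S" "sum_mset m = x" unfolding lengths_def by auto
      then have "sum_mset m = of_nat (size m)" using atoms1 sum_ones by auto
      then show "l \<in> {n0}" using m n0 by simp
    qed
    show "{n0} \<subseteq> lengths S x"
    proof -
      have "set_mset (replicate_mset n0 (1::rat)) \<subseteq> atoms S" using atoms1 by auto
      moreover have "sum_mset (replicate_mset n0 (1::rat)) = x" using n0 by simp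
      ultimately have "size (replicate_mset n0 (1::rat)) \<in> lengths S x" unfolding lengths_def by blast
      then show ?thesis by simp
    qed
  qed
  then show "AAP d 0 (int ` lengths (exp_puiseux r N) x)" using AAP_single by (simp add: S_def)
qed

lemma cofinite_bound: assumes "finite (UNIV - N)" shows "\<exists>c. \<forall>s\<ge>c. s \<in> (N::nat set)"
proof -
  obtain c where c: "\<forall>s\<in>UNIV - N. s < c" using assms finite_nat_set_iff_bounded by blast
  have "\<forall>s\<ge>c. s \<in> N"
  proof (intro allI impI)
    fix s assume "s \<ge> c"
    show "s \<in> N"
    proof (rule ccontr)
      assume "s \<notin> N" then have "s < c" using c by auto
      with \<open>s \<ge> c\<close> show False by simp
    qed
  qed
  then show ?thesis by blast
qed

lemma caseII:
  fixes r :: rat and N :: "nat set" and b :: int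
  assumes NM: "numerical_monoid N" and rb: "r = 1 / of_int b" and b2: "b \<ge> 2"
  shows "\<not> atomic (exp_puiseux r N)"
proof
  assume at: "atomic (exp_puiseux r N)"
  define G where "G = {r ^ k | k. k \<in> N}"
  define S where "S = exp_puiseux r N"
  have SG: "S = gen_monoid G" unfolding S_def G_def exp_puiseux_def by simp
  have N0: "0 \<in> N" using NM numerical_monoid_def by auto
  have rpos: "r > 0" using rb b2 by simp
  have Gpos: "\<forall>g\<in>G. g > 0" unfolding G_def using rpos by auto
  have fin: "finite (UNIV - N)" using NM numerical_monoid_def by auto
  have powS: "r ^ j \<in> S" if "j \<in> N" for j
  proof -
    have "r ^ j \<in> G" unfolding G_def using that by blast
    then show ?thesis unfolding SG by (rule gm_gen)
  qed
  have powS': "of_nat c1 * r ^ j \<in> S" if "j \<in> N" for j c1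
  proof -
    have "r ^ j \<in> G" unfolding G_def using that by blast
    then show ?thesis unfolding SG by (rule gm_rep)
  qed
  obtain c where c: "\<forall>s\<ge>c. s \<in> N" using cofinite_bound[OF fin] by blast
  have noatom: "y \<notin> atoms S" for y
  proof
    assume y: "y \<in> atoms S"
    have ind: "\<forall>u\<in>S. \<forall>v\<in>S. y = u + v \<longrightarrow> u = 0 \<or> v = 0" using y unfolding atoms_def by blast
    have "y \<in> G" using atoms_sub[OF Gpos] SG y by blast
    then obtain k where k: "y = r ^ k" "k \<in> N" unfolding G_def by blast
    define j where "j = max c (Suc k)"
    have jN: "j \<in> N" using c by (simp add: j_def)
    have jk: "j > k" by (simp add: j_def)
    have bnz: "(of_int b :: rat) \<noteq> 0" using b2 by simp
    have rb1: "(of_int b :: rat) * r = 1" using rb bnz by simp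
    have y2: "y = of_int (b ^ (j - k)) * r ^ j"
    proof -
      have "r ^ j = r ^ k * r ^ (j - k)" using jk by (simp add: power_add[symmetric])
      moreover have "(of_int b :: rat) ^ (j - k) * r ^ (j - k) = 1"
        using rb1 by (metis power_mult_distrib power_one)
      ultimately show ?thesis using k by (simp add: algebra_simps)
    qed
    have bp: "b ^ (j - k) \<ge> 2"
    proof -
      have "b ^ 1 \<le> b ^ (j - k)" using b2 jk by (intro power_increasing) auto
      then show ?thesis using b2 by simp
    qed
    define c1 where "c1 = nat (b ^ (j - k) - 1)"
    have c1v: "(of_nat c1 :: rat) = of_int (b ^ (j - k)) - 1" using bp unfolding c1_def by simp
    have e1: "(of_int (b ^ (j - k)) :: rat) = 1 + of_nat c1" using c1v by simp
    have "y = (1 + of_nat c1) * r ^ j" using y2 unfolding e1 .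
    then have "y = r ^ j + of_nat c1 * r ^ j" by (simp add: distrib_right)
    moreover have "r ^ j \<noteq> 0" using rpos by simp
    moreover have "of_nat c1 * r ^ j \<noteq> 0"
    proof -
      have "c1 \<ge> 1" unfolding c1_def using bp by simp
      then show ?thesis using rpos by simp
    qed
    ultimately show False using ind powS[OF jN] powS'[OF jN, of c1] by blast
  qed
  have "(1::rat) \<in> S" using powS[OF N0] by simp
  then obtain m where m: "set_mset m \<subseteq> atoms S" "sum_mset m = 1" using at unfolding atomic_def S_def by auto
  have "m \<noteq> {#}" using m by auto
  then obtain g where "g \<in># m" by auto
  then show False using m noatom by auto
qed


lemma Max_Ls: assumes "d \<ge> 0" "n \<ge> 1" shows "Max {d * int k | k. k < n} = d * int (n - 1)"
proof (rule Max_eqI)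
  have "{d * int k | k. k < n} = (\<lambda>k. d * int k) ` {..<n}" by auto
  then show "finite {d * int k | k. k < n}" by simp
  show "d * int (n - 1) \<in> {d * int k | k. k < n}" using assms by (auto intro!: exI[of _ "n - 1"])
  fix y assume "y \<in> {d * int k | k. k < n}"
  then obtain k where "y = d * int k" "k < n" by auto
  then show "y \<le> d * int (n - 1)" using assms by (auto intro: mult_left_mono)
qed

lemma AAP_gt:
  fixes d K y0 :: int and \<Lambda> :: "int set"
  assumes d1: "d \<ge> 1" and K0: "K \<ge> 0" and L: "L = (\<lambda>l. y0 + d * l) ` \<Lambda>"
    and H: "(\<exists>Y\<ge>0. (\<forall>n. 0 \<le> n \<and> n \<le> Y \<longrightarrow> n \<in> \<Lambda>) \<and> (\<forall>l\<in>\<Lambda>. 0 \<le> l \<and> l \<le> Y + K))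
          \<or> ((\<forall>n\<ge>0. n \<in> \<Lambda>) \<and> (\<forall>l\<in>\<Lambda>. 0 \<le> l))"
  shows "AAP d (nat (d * K)) L"
  using H
proof
  assume "\<exists>Y\<ge>0. (\<forall>n. 0 \<le> n \<and> n \<le> Y \<longrightarrow> n \<in> \<Lambda>) \<and> (\<forall>l\<in>\<Lambda>. 0 \<le> l \<and> l \<le> Y + K)"
  then obtain Y where Y: "Y \<ge> 0" "\<forall>n. 0 \<le> n \<and> n \<le> Y \<longrightarrow> n \<in> \<Lambda>" "\<forall>l\<in>\<Lambda>. 0 \<le> l \<and> l \<le> Y + K" by blast
  define n where "n = Suc (nat Y)"
  define Ls where "Ls = {d * int k | k. k < n}"
  define L2 where "L2 = (\<lambda>l. d * l) ` {l\<in>\<Lambda>. l > Y}"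
  have MLs: "Max Ls = d * Y" unfolding Ls_def using Max_Ls[of d n] d1 Y(1) by (simp add: n_def)
  show ?thesis
  proof (rule AAP_I[of L y0 "{}" Ls L2])
    show "L = (\<lambda>z. y0 + z) ` ({} \<union> Ls \<union> L2)"
    proof
      show "L \<subseteq> (\<lambda>z. y0 + z) ` ({} \<union> Ls \<union> L2)"
      proof
        fix z assume "z \<in> L"
        then obtain l where l: "l \<in> \<Lambda>" "z = y0 + d * l" using L by auto
        show "z \<in> (\<lambda>z. y0 + z) ` ({} \<union> Ls \<union> L2)"
        proof (cases "l \<le> Y")
          case True
          then have "d * l \<in> Ls" unfolding Ls_def n_def using Y(3) l(1)
            by (auto intro!: exI[of _ "nat l"])
          then show ?thesis using l by auto
        next
          case False
          then have "d * l \<in> L2" unfolding L2_def using l(1) by auto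
          then show ?thesis using l by auto
        qed
      qed
      show "(\<lambda>z. y0 + z) ` ({} \<union> Ls \<union> L2) \<subseteq> L"
      proof
        fix z assume "z \<in> (\<lambda>z. y0 + z) ` ({} \<union> Ls \<union> L2)"
        then obtain u where u: "u \<in> Ls \<union> L2" "z = y0 + u" by auto
        have "\<exists>l\<in>\<Lambda>. u = d * l" using u(1)
        proof
          assume "u \<in> Ls"
          then obtain k where k: "u = d * int k" "k < n" unfolding Ls_def by auto
          then have "k \<le> nat Y" unfolding n_def by simp
          then have "int k \<le> Y" using Y(1) by linarith
          then have "int k \<in> \<Lambda>" using Y(2) by simp
          then show ?thesis using k by blast
        next
          assume "u \<in> L2" then show ?thesis unfolding L2_def by auto
        qed
        then obtain l where "l \<in> \<Lambda>" "u = d * l" by blast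
        then show "z \<in> L" using u L by auto
      qed
    qed
    show "\<forall>z\<in>L. d dvd z - y0" using L by auto
    show "{} \<subseteq> {- int (nat (d * K))..-1}" by simp
    have "L2 \<subseteq> {Max Ls + 1..Max Ls + int (nat (d * K))}"
    proof
      fix u assume "u \<in> L2"
      then obtain l where l: "l \<in> \<Lambda>" "l > Y" "u = d * l" unfolding L2_def by auto
      have "d * (Y + 1) \<le> d * l" using l d1 by (intro mult_left_mono) auto
      moreover have "d * l \<le> d * (Y + K)" using l Y(3) d1 by (intro mult_left_mono) auto
      moreover have "d * K \<ge> 0" using d1 K0 by simp
      ultimately show "u \<in> {Max Ls + 1..Max Ls + int (nat (d * K))}"
        using l(3) MLs d1 by (simp add: algebra_simps)
    qed
    then show "(Ls = {d * int k | k. True} \<and> L2 = {}) \<or>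
      (\<exists>n\<ge>1. Ls = {d * int k | k. k < n} \<and> L2 \<subseteq> {Max Ls + 1..Max Ls + int (nat (d * K))})"
      unfolding Ls_def n_def by auto
  qed
next
  assume A: "(\<forall>n\<ge>0. n \<in> \<Lambda>) \<and> (\<forall>l\<in>\<Lambda>. 0 \<le> l)"
  define Ls where "Ls = {d * int k | k. True}"
  show ?thesis
  proof (rule AAP_I[of L y0 "{}" Ls "{}"])
    show "L = (\<lambda>z. y0 + z) ` ({} \<union> Ls \<union> {})"
    proof
      show "L \<subseteq> (\<lambda>z. y0 + z) ` ({} \<union> Ls \<union> {})"
      proof
        fix z assume "z \<in> L"
        then obtain l where l: "l \<in> \<Lambda>" "z = y0 + d * l" using L by auto
        then have "d * l \<in> Ls" unfolding Ls_def using A by (auto intro!: exI[of _ "nat l"])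
        then show "z \<in> (\<lambda>z. y0 + z) ` ({} \<union> Ls \<union> {})" using l by auto
      qed
      show "(\<lambda>z. y0 + z) ` ({} \<union> Ls \<union> {}) \<subseteq> L"
      proof
        fix z assume "z \<in> (\<lambda>z. y0 + z) ` ({} \<union> Ls \<union> {})"
        then obtain k where k: "z = y0 + d * int k" unfolding Ls_def by auto
        have "int k \<in> \<Lambda>" using A by auto
        then show "z \<in> L" using k L by auto
      qed
    qed
    show "\<forall>z\<in>L. d dvd z - y0" using L by auto
  qed (auto simp: Ls_def)
qed

lemma AAP_lt:
  fixes d K y0 :: int and \<Lambda> :: "int set"
  assumes d1: "d \<ge> 1" and K0: "K \<ge> 0" and L: "L = (\<lambda>l. y0 + d * l) ` \<Lambda>" and z0: "0 \<in> \<Lambda>"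
    and H: "(\<exists>Y. 0 \<le> Y \<and> Y \<le> K \<and> (\<forall>n\<ge>Y. n \<in> \<Lambda>) \<and> (\<forall>l\<in>\<Lambda>. 0 \<le> l))
          \<or> (\<forall>l\<in>\<Lambda>. 0 \<le> l \<and> l \<le> K)"
  shows "AAP d (nat (d * K)) L"
  using H
proof
  assume "\<exists>Y. 0 \<le> Y \<and> Y \<le> K \<and> (\<forall>n\<ge>Y. n \<in> \<Lambda>) \<and> (\<forall>l\<in>\<Lambda>. 0 \<le> l)"
  then obtain Y where Y: "0 \<le> Y" "Y \<le> K" "\<forall>n\<ge>Y. n \<in> \<Lambda>" "\<forall>l\<in>\<Lambda>. 0 \<le> l" by blast
  define y where "y = y0 + d * Y"
  define Ls where "Ls = {d * int k | k. True}"
  define L1 where "L1 = (\<lambda>l. d * (l - Y)) ` {l\<in>\<Lambda>. l < Y}"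
  show ?thesis
  proof (rule AAP_I[of L y L1 Ls "{}"])
    show "L = (\<lambda>z. y + z) ` (L1 \<union> Ls \<union> {})"
    proof
      show "L \<subseteq> (\<lambda>z. y + z) ` (L1 \<union> Ls \<union> {})"
      proof
        fix z assume "z \<in> L"
        then obtain l where l: "l \<in> \<Lambda>" "z = y0 + d * l" using L by auto
        have zl: "z = y + d * (l - Y)" using l unfolding y_def by (simp add: algebra_simps)
        show "z \<in> (\<lambda>z. y + z) ` (L1 \<union> Ls \<union> {})"
        proof (cases "l < Y")
          case True
          then have "d * (l - Y) \<in> L1" unfolding L1_def using l by auto
          then show ?thesis using zl by auto
        next
          case False
          then have "d * (l - Y) \<in> Ls" unfolding Ls_def by (auto intro!: exI[of _ "nat (l - Y)"])
          then show ?thesis using zl by auto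
        qed
      qed
      show "(\<lambda>z. y + z) ` (L1 \<union> Ls \<union> {}) \<subseteq> L"
      proof
        fix z assume "z \<in> (\<lambda>z. y + z) ` (L1 \<union> Ls \<union> {})"
        then obtain u where u: "u \<in> L1 \<union> Ls" "z = y + u" by auto
        have "\<exists>l\<in>\<Lambda>. z = y0 + d * l" using u(1)
        proof
          assume "u \<in> L1"
          then obtain l where "l \<in> \<Lambda>" "u = d * (l - Y)" unfolding L1_def by auto
          then show ?thesis using u unfolding y_def by (auto simp: algebra_simps)
        next
          assume "u \<in> Ls"
          then obtain k where k: "u = d * int k" unfolding Ls_def by auto
          have "Y + int k \<in> \<Lambda>" using Y(3) by simp
          moreover have "z = y0 + d * (Y + int k)" using u k unfolding y_def by (simp add: algebra_simps)
          ultimately show ?thesis by blast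
        qed
        then obtain l where "l \<in> \<Lambda>" "z = y0 + d * l" by blast
        then show "z \<in> L" using L by auto
      qed
    qed
    show "\<forall>z\<in>L. d dvd z - y"
    proof
      fix z assume "z \<in> L"
      then obtain l where "z = y0 + d * l" using L by auto
      then have "z - y = d * (l - Y)" unfolding y_def by (simp add: algebra_simps)
      then show "d dvd z - y" by simp
    qed
    show "L1 \<subseteq> {- int (nat (d * K))..-1}"
    proof
      fix u assume "u \<in> L1"
      then obtain l where l: "l \<in> \<Lambda>" "l < Y" "u = d * (l - Y)" unfolding L1_def by auto
      have "d * (l - Y) \<le> d * (-1)" using l d1 by (intro mult_left_mono) auto
      moreover have "d * (-K) \<le> d * (l - Y)" using l Y d1 by (intro mult_left_mono) auto
      moreover have "d * K \<ge> 0" using d1 K0 by simp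
      ultimately show "u \<in> {- int (nat (d * K))..-1}" using l(3) d1 by simp
    qed
  qed (auto simp: Ls_def)
next
  assume A: "\<forall>l\<in>\<Lambda>. 0 \<le> l \<and> l \<le> K"
  show ?thesis
  proof (rule AAP_gt[OF d1 K0 L])
    show "(\<exists>Y\<ge>0. (\<forall>n. 0 \<le> n \<and> n \<le> Y \<longrightarrow> n \<in> \<Lambda>) \<and> (\<forall>l\<in>\<Lambda>. 0 \<le> l \<and> l \<le> Y + K))
          \<or> ((\<forall>n\<ge>0. n \<in> \<Lambda>) \<and> (\<forall>l\<in>\<Lambda>. 0 \<le> l))"
      using A z0 by (intro disjI1 exI[of _ 0]) auto
  qed
qed


lemma msum_dvd: fixes f :: "rat \<Rightarrow> rat" and D :: int
  shows "(\<forall>g\<in>#m. \<exists>c. f g = of_int (D * c)) \<Longrightarrow> \<exists>C. (\<Sum>g\<in>#m. f g) = of_int (D * C)"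
proof (induction m)
  case empty then show ?case by (intro exI[of _ 0]) simp
next
  case (add x m)
  then obtain C where C: "(\<Sum>g\<in>#m. f g) = of_int (D * C)" by auto
  obtain c where c: "f x = of_int (D * c)" using add.prems by auto
  show ?case using C c by (intro exI[of _ "c + C"]) (simp add: algebra_simps)
qed

lemma pow_scaled: fixes a b :: int assumes "b \<noteq> 0" "t \<le> T"
  shows "(of_int a / of_int b :: rat) ^ t * of_int b ^ T = of_int (a ^ t * b ^ (T - t))"
proof -
  have bnz: "(of_int b :: rat) \<noteq> 0" using assms by simp
  have "(of_int b :: rat) ^ T = of_int b ^ t * of_int b ^ (T - t)"
    using assms by (simp add: power_add[symmetric])
  then show ?thesis using bnz by (simp add: power_divide)
qed

lemma exT: fixes r :: rat
  shows "(\<forall>g\<in>#m. \<exists>t. g = r ^ t \<and> s < t) \<Longrightarrow> \<exists>T. \<forall>g\<in>#m. \<exists>t. g = r ^ t \<and> s < t \<and> t \<le> T"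
proof (induction m)
  case empty then show ?case by simp
next
  case (add x m)
  then obtain T where T: "\<forall>g\<in>#m. \<exists>t. g = r ^ t \<and> s < t \<and> t \<le> T" by auto
  obtain t where t: "x = r ^ t" "s < t" using add.prems by auto
  show ?case
  proof (rule exI[of _ "max T t"], intro ballI)
    fix g assume g: "g \<in># add_mset x m"
    show "\<exists>t'. g = r ^ t' \<and> s < t' \<and> t' \<le> max T t"
    proof (cases "g = x")
      case True then show ?thesis using t by (intro exI[of _ t]) auto
    next
      case False
      then have "g \<in># m" using g by auto
      then obtain t' where "g = r ^ t'" "s < t'" "t' \<le> T" using T by blast
      then show ?thesis by (intro exI[of _ t']) auto
    qed
  qed
qed

lemma no_split:
  fixes r :: rat and a b :: int
  assumes r: "r = of_int a / of_int b" and a2: "a \<ge> 2" and b2: "b \<ge> 2" and cop: "coprime a b"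
    and mG: "\<forall>g\<in>#m. \<exists>t. g = r ^ t" and sm: "sum_mset m = r ^ s" and sz: "size m \<ge> 2"
  shows False
proof -
  have bnz: "b \<noteq> 0" using b2 by simp
  have rpos: "r > 0" using r a2 b2 by simp
  have gpos: "\<forall>g\<in>#m. g > 0" using mG rpos by auto
  have lt: "g < r ^ s" if gm: "g \<in># m" for g
  proof -
    obtain m' where m': "m = add_mset g m'" using gm by (metis multi_member_split)
    have "m' \<noteq> {#}" using sz m' by auto
    then have "sum_mset m' > 0" using gpos m' by (intro sum_mset_pos) auto
    moreover have "r ^ s = g + sum_mset m'" using sm m' by simp
    ultimately show ?thesis by simp
  qed
  have ab: "a \<noteq> b"
  proof
    assume "a = b"
    then have "is_unit a" using cop by simp
    then show False using a2 by simp
  qed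
  show False
  proof (cases "a > b")
    case True
    have r1: "r > 1"
    proof -
      have "r * of_int b = of_int a" using r bnz by simp
      then have "1 * of_int b < r * (of_int b :: rat)" using True by simp
      then show ?thesis by (rule mult_right_less_imp_less) (use b2 in simp)
    qed
    have each: "\<exists>c. g * of_int b ^ s = of_int (b * c)" if gm: "g \<in># m" for g
    proof -
      obtain t where t: "g = r ^ t" using mG gm by auto
      have "t < s" using lt[OF gm] t r1 by simp
      then have "g * of_int b ^ s = of_int (a ^ t * b ^ (s - t))" using pow_scaled[OF bnz, of t s a] t r by simp
      moreover have "b ^ (s - t) = b * b ^ (s - t - 1)" using \<open>t < s\<close> by (simp add: power_eq_if)
      ultimately show ?thesis by (intro exI[of _ "a ^ t * b ^ (s - t - 1)"]) (simp add: algebra_simps)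
    qed
    obtain C where C: "(\<Sum>g\<in>#m. g * of_int b ^ s) = of_int (b * C)" using msum_dvd[of m "\<lambda>g. g * of_int b ^ s" b] each by auto
    have "(\<Sum>g\<in>#m. g * of_int b ^ s) = sum_mset m * of_int b ^ s" by (induction m) (auto simp: algebra_simps)
    also have "\<dots> = of_int (a ^ s)" using sm pow_scaled[OF bnz, of s s a] r by simp
    finally have "a ^ s = b * C" using C by (metis of_int_eq_iff)
    then have "b dvd a ^ s" by simp
    moreover have "coprime b (a ^ s)" using cop by (simp add: coprime_commute)
    ultimately have "is_unit b" by (meson coprime_common_divisor dvd_refl)
    then show False using b2 by simp
  next
    case False
    then have ablt: "a < b" using ab by simp
    have r1: "r < 1"
    proof -
      have "r * of_int b = of_int a" using r bnz by simp
      then have "r * of_int b < 1 * (of_int b :: rat)" using ablt by simp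
      then show ?thesis by (rule mult_right_less_imp_less) (use b2 in simp)
    qed
    have mt: "\<forall>g\<in>#m. \<exists>t. g = r ^ t \<and> s < t"
    proof
      fix g assume gm: "g \<in># m"
      obtain t where t: "g = r ^ t" using mG gm by auto
      have "s < t" using lt[OF gm] t r1 rpos by simp
      then show "\<exists>t. g = r ^ t \<and> s < t" using t by blast
    qed
    obtain T where T: "\<forall>g\<in>#m. \<exists>t. g = r ^ t \<and> s < t \<and> t \<le> T" using exT[OF mt] by blast
    have "m \<noteq> {#}" using sz by auto
    then obtain g0 where "g0 \<in># m" by auto
    then have sT: "s < T" using T by fastforce
    have each: "\<exists>c. g * of_int b ^ T = of_int (a ^ Suc s * c)" if gm: "g \<in># m" for g
    proof -
      obtain t where t: "g = r ^ t" "s < t" "t \<le> T" using T gm by blast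
      have "g * of_int b ^ T = of_int (a ^ t * b ^ (T - t))" using pow_scaled[OF bnz t(3), of a] t(1) r by simp
      moreover have "a ^ t = a ^ Suc s * a ^ (t - Suc s)"
      proof -
        have "t = Suc s + (t - Suc s)" using t(2) by simp
        then show ?thesis by (metis power_add)
      qed
      ultimately show ?thesis by (intro exI[of _ "a ^ (t - Suc s) * b ^ (T - t)"]) (simp add: algebra_simps)
    qed
    obtain C where C: "(\<Sum>g\<in>#m. g * of_int b ^ T) = of_int (a ^ Suc s * C)"
      using msum_dvd[of m "\<lambda>g. g * of_int b ^ T" "a ^ Suc s"] each by auto
    have "(\<Sum>g\<in>#m. g * of_int b ^ T) = sum_mset m * of_int b ^ T" by (induction m) (auto simp: algebra_simps)
    also have "\<dots> = of_int (a ^ s * b ^ (T - s))" using sm pow_scaled[OF bnz, of s T a] r sT by simp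
    finally have E1: "(\<Sum>g\<in>#m. g * of_int b ^ T) = of_int (a ^ s * b ^ (T - s))" .
    have "(of_int (a ^ s * b ^ (T - s)) :: rat) = of_int (a ^ Suc s * C)" using C E1 by metis
    then have "a ^ s * b ^ (T - s) = a ^ Suc s * C" by (simp only: of_int_eq_iff)
    then have "a ^ s * b ^ (T - s) = a ^ s * (a * C)" by (simp add: algebra_simps)
    then have "b ^ (T - s) = a * C" using a2 by simp
    then have "a dvd b ^ (T - s)" by simp
    moreover have "coprime a (b ^ (T - s))" using cop by simp
    ultimately have "is_unit a" by (meson coprime_common_divisor dvd_refl)
    then show False using a2 by simp
  qed
qed

lemma atomsIII:
  fixes r :: rat and a b :: int and N :: "nat set"
  assumes r: "r = of_int a / of_int b" and a2: "a \<ge> 2" and b2: "b \<ge> 2" and cop: "coprime a b"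
  shows "atoms (gen_monoid {r ^ k | k. k \<in> N}) = {r ^ k | k. k \<in> N}"
proof
  have rpos: "r > 0" using r a2 b2 by simp
  show "atoms (gen_monoid {r ^ k | k. k \<in> N}) \<subseteq> {r ^ k | k. k \<in> N}"
    by (rule atoms_sub) (use rpos in auto)
  show "{r ^ k | k. k \<in> N} \<subseteq> atoms (gen_monoid {r ^ k | k. k \<in> N})"
  proof
    fix g assume gG: "g \<in> {r ^ k | k. k \<in> N}"
    then obtain s where s: "g = r ^ s" by auto
    have "g \<in> gen_monoid {r ^ k | k. k \<in> N}" using gG by (rule gm_gen)
    moreover have "g \<noteq> 0" using s rpos by simp
    moreover have "\<forall>u\<in>gen_monoid {r ^ k | k. k \<in> N}. \<forall>v\<in>gen_monoid {r ^ k | k. k \<in> N}. g = u + v \<longrightarrow> u = 0 \<or> v = 0"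
    proof (intro ballI impI)
      fix u v assume uv: "u \<in> gen_monoid {r ^ k | k. k \<in> N}" "v \<in> gen_monoid {r ^ k | k. k \<in> N}" "g = u + v"
      show "u = 0 \<or> v = 0"
      proof (rule ccontr)
        assume "\<not> (u = 0 \<or> v = 0)"
        then obtain m where m: "set_mset m \<subseteq> {r ^ k | k. k \<in> N}" "sum_mset m = u + v" "size m \<ge> 2"
          using split_ge2[OF uv(1,2)] by auto
        have mG: "\<forall>g\<in>#m. \<exists>t. g = r ^ t" using m(1) by auto
        have "sum_mset m = r ^ s" using m(2) uv(3) s by simp
        then show False using no_split[OF r a2 b2 cop mG _ m(3)] by blast
      qed
    qed
    ultimately show "g \<in> atoms (gen_monoid {r ^ k | k. k \<in> N})" unfolding atoms_def by blast
  qed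
qed

lemma N_infinite: "numerical_monoid N \<Longrightarrow> infinite N"
proof
  assume "numerical_monoid N" "finite N"
  then have "finite (UNIV - N)" unfolding numerical_monoid_def by auto
  with \<open>finite N\<close> have "finite (N \<union> (UNIV - N))" by simp
  then show False by simp
qed

lemma enum_tail: assumes "numerical_monoid N"
  shows "\<exists>p\<ge>1. \<forall>i\<ge>p. enumerate N (Suc i) = Suc (enumerate N i)"
proof -
  have inf: "infinite N" using N_infinite[OF assms] .
  have fin: "finite (UNIV - N)" using assms numerical_monoid_def by auto
  obtain c where c: "\<forall>s\<ge>c. s \<in> N" using cofinite_bound[OF fin] by blast
  have "\<forall>i\<ge>Suc c. enumerate N (Suc i) = Suc (enumerate N i)"
  proof (intro allI impI)
    fix i assume "i \<ge> Suc c"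
    then have "enumerate N i \<ge> c" using le_enumerate[OF inf, of i] by simp
    then have "Suc (enumerate N i) \<in> N" using c by simp
    then obtain j where j: "enumerate N j = Suc (enumerate N i)" using enumerate_Ex[OF inf] by blast
    then have "i < j" using enumerate_mono_iff[OF inf, of i j] by simp
    then have "enumerate N (Suc i) \<le> enumerate N j" using enumerate_mono_le_iff[OF inf] by simp
    moreover have "enumerate N i < enumerate N (Suc i)" using enumerate_step[OF inf] .
    ultimately show "enumerate N (Suc i) = Suc (enumerate N i)" using j by simp
  qed
  then show ?thesis by (intro exI[of _ "Suc c"]) simp
qed

lemma MZ: fixes rho :: "nat \<Rightarrow> rat" assumes inj: "inj rho"
  shows "set_mset m \<subseteq> rho ` {..<M} \<Longrightarrow> size m = (\<Sum>i<M. count m (rho i)) \<and> sum_mset m = (\<Sum>i<M. of_nat (count m (rho i)) * rho i)"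
proof (induction m)
  case empty then show ?case by simp
next
  case (add x m)
  then obtain j where j: "j < M" "x = rho j" by auto
  have IH: "size m = (\<Sum>i<M. count m (rho i))" "sum_mset m = (\<Sum>i<M. of_nat (count m (rho i)) * rho i)"
    using add by auto
  have c: "count (add_mset x m) (rho i) = count m (rho i) + (if i = j then 1 else 0)" for i
    using inj j(2) by (auto simp: inj_eq)
  have "(\<Sum>i<M. count (add_mset x m) (rho i)) = (\<Sum>i<M. count m (rho i)) + 1"
    unfolding c by (simp add: sum.distrib j(1))
  moreover have "(\<Sum>i<M. of_nat (count (add_mset x m) (rho i)) * rho i) = (\<Sum>i<M. of_nat (count m (rho i)) * rho i) + rho j"
  proof -
    have pw: "of_nat (count (add_mset x m) (rho i)) * rho i = of_nat (count m (rho i)) * rho i + (if i = j then rho j else 0)" for i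
      unfolding c by (simp add: distrib_right)
    show ?thesis unfolding pw using j(1) by (simp add: sum.distrib)
  qed
  ultimately show ?case using IH j by simp
qed

lemma ZM: fixes rho :: "nat \<Rightarrow> rat"
  shows "size (\<Sum>i<M. replicate_mset (z i) (rho i)) = (\<Sum>i<M. z i) \<and>
    sum_mset (\<Sum>i<M. replicate_mset (z i) (rho i)) = (\<Sum>i<M. of_nat (z i) * rho i) \<and>
    set_mset (\<Sum>i<M. replicate_mset (z i) (rho i)) \<subseteq> rho ` {..<M}"
  by (induction M) auto

lemma LZ: fixes rho :: "nat \<Rightarrow> rat" assumes inj: "inj rho" and AT: "atoms S = range rho"
  shows "lengths S x = {\<Sum>i<M. z i | z M. (\<forall>i\<ge>M. z i = 0) \<and> (\<Sum>i<M. of_nat (z i) * rho i) = x}"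
proof
  show "lengths S x \<subseteq> {\<Sum>i<M. z i | z M. (\<forall>i\<ge>M. z i = 0) \<and> (\<Sum>i<M. of_nat (z i) * rho i) = x}"
  proof
    fix l assume "l \<in> lengths S x"
    then obtain m where m: "l = size m" "set_mset m \<subseteq> atoms S" "sum_mset m = x" unfolding lengths_def by auto
    define J where "J = rho -` set_mset m"
    have "finite J" unfolding J_def using inj by (intro finite_vimageI) auto
    then obtain M where M: "\<forall>i\<in>J. i < M" using finite_nat_set_iff_bounded by blast
    have sub: "set_mset m \<subseteq> rho ` {..<M}"
    proof
      fix y assume "y \<in> set_mset m"
      then obtain i where "y = rho i" using m(2) AT by auto
      then have "i \<in> J" using \<open>y \<in> set_mset m\<close> by (simp add: J_def)
      then show "y \<in> rho ` {..<M}" using M \<open>y = rho i\<close> by auto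
    qed
    have z0: "\<forall>i\<ge>M. count m (rho i) = 0"
    proof (intro allI impI)
      fix i assume "i \<ge> M"
      then have "i \<notin> J" using M by auto
      then show "count m (rho i) = 0" by (simp add: J_def count_eq_zero_iff)
    qed
    have "l = (\<Sum>i<M. count m (rho i))" "x = (\<Sum>i<M. of_nat (count m (rho i)) * rho i)"
      using MZ[OF inj sub] m by auto
    then show "l \<in> {\<Sum>i<M. z i | z M. (\<forall>i\<ge>M. z i = 0) \<and> (\<Sum>i<M. of_nat (z i) * rho i) = x}"
      using z0 by blast
  qed
  show "{\<Sum>i<M. z i | z M. (\<forall>i\<ge>M. z i = 0) \<and> (\<Sum>i<M. of_nat (z i) * rho i) = x} \<subseteq> lengths S x"
  proof
    fix l assume "l \<in> {\<Sum>i<M. z i | z M. (\<forall>i\<ge>M. z i = 0) \<and> (\<Sum>i<M. of_nat (z i) * rho i) = x}"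
    then obtain z M where zM: "l = (\<Sum>i<M. z i)" "(\<Sum>i<M. of_nat (z i) * rho i) = x" by auto
    define m where "m = (\<Sum>i<M. replicate_mset (z i) (rho i))"
    have "size m = l" "sum_mset m = x" "set_mset m \<subseteq> atoms S"
      using ZM[of z rho M] zM AT unfolding m_def by auto
    then show "l \<in> lengths S x" unfolding lengths_def by blast
  qed
qed


lemma sum_ext: fixes f :: "nat \<Rightarrow> 'a::comm_monoid_add"
  assumes "\<forall>i\<ge>M. f i = 0" "M \<le> K" shows "(\<Sum>i<K. f i) = (\<Sum>i<M. f i)"
proof (rule sum.mono_neutral_right)
  show "{..<M} \<subseteq> {..<K}" using assms by auto
  show "\<forall>i\<in>{..<K} - {..<M}. f i = 0" using assms by auto
qed auto

locale c3 = tr a b e for a b :: int and e :: "nat \<Rightarrow> nat" +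
  fixes p :: nat
  assumes a2: "a \<ge> 2" and b2: "b \<ge> 2" and tail: "\<And>i. i \<ge> p \<Longrightarrow> e (Suc i) = Suc (e i)" and p1: "p \<ge> 1"
begin

definition ww :: "nat \<Rightarrow> int" where "ww i = (\<Sum>l<kk i. b ^ (kk i - Suc l) * a ^ l)"

lemma AB_w: "AA i - BB i = (a - b) * ww i"
  unfolding AA_def BB_def ww_def by (rule power_diff_sumr2)

lemma BA_w: "BB i - AA i = (b - a) * ww i"
  using AB_w[of i] by (simp add: algebra_simps)

lemma ww1: "ww i \<ge> 1"
proof -
  obtain k where k: "kk i = Suc k" using kk1[of i] by (cases "kk i") auto
  have "ww i = b ^ k * a ^ 0 + (\<Sum>l<k. b ^ (Suc k - Suc (Suc l)) * a ^ (Suc l))"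
    unfolding ww_def k sum.lessThan_Suc_shift by simp
  moreover have "b ^ k \<ge> 1" using b2 by simp
  moreover have "(\<Sum>l<k. b ^ (Suc k - Suc (Suc l)) * a ^ (Suc l)) \<ge> 0"
    using a2 b2 by (intro sum_nonneg) simp
  ultimately show ?thesis by simp
qed

lemma kk_tail: "i \<ge> p \<Longrightarrow> kk i = 1"
  unfolding kk_def using tail by simp

sublocale S: sysc AA BB ww p a b
proof
  show "AA i \<ge> 1" for i unfolding AA_def using a2 by simp
  show "BB i \<ge> 1" for i unfolding BB_def using b2 by simp
  show "ww i \<ge> 1" for i by (rule ww1)
  show "i \<ge> p \<Longrightarrow> AA i = a" for i unfolding AA_def using kk_tail by simp
  show "i \<ge> p \<Longrightarrow> BB i = b" for i unfolding BB_def using kk_tail by simp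
  show "i \<ge> p \<Longrightarrow> ww i = 1" for i unfolding ww_def using kk_tail by simp
qed

lemma char:
  fixes zst :: "nat \<Rightarrow> nat" and Ms :: nat and x :: rat
  assumes zst0: "\<forall>i\<ge>Ms. zst i = 0" and zval: "(\<Sum>i<Ms. of_nat (zst i) * rho i) = x"
  shows "int ` {\<Sum>i<M. z i | z M. (\<forall>i\<ge>M. z i = 0) \<and> (\<Sum>i<M. of_nat (z i) * rho i) = x}
        = (\<lambda>l. int (\<Sum>i<Ms. zst i) + (a - b) * l) ` S.Lam (\<lambda>i. int (zst i))"
proof
  define zs where "zs = (\<lambda>i. int (zst i))"
  show "int ` {\<Sum>i<M. z i | z M. (\<forall>i\<ge>M. z i = 0) \<and> (\<Sum>i<M. of_nat (z i) * rho i) = x}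
        \<subseteq> (\<lambda>l. int (\<Sum>i<Ms. zst i) + (a - b) * l) ` S.Lam (\<lambda>i. int (zst i))"
  proof
    fix n assume "n \<in> int ` {\<Sum>i<M. z i | z M. (\<forall>i\<ge>M. z i = 0) \<and> (\<Sum>i<M. of_nat (z i) * rho i) = x}"
    then obtain z M where zM: "n = int (\<Sum>i<M. z i)" "\<forall>i\<ge>M. z i = 0" "(\<Sum>i<M. of_nat (z i) * rho i) = x" by auto
    define K where "K = max M Ms"
    define \<delta> where "\<delta> = (\<lambda>i. int (z i) - int (zst i))"
    have dK: "\<forall>i\<ge>K. \<delta> i = 0" using zM(2) zst0 by (auto simp: \<delta>_def K_def)
    have v1: "(\<Sum>i<K. of_nat (z i) * rho i) = x"
      using sum_ext[of M "\<lambda>i. of_nat (z i) * rho i" K] zM(2,3) by (simp add: K_def)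
    have v2: "(\<Sum>i<K. of_nat (zst i) * rho i) = x"
      using sum_ext[of Ms "\<lambda>i. of_nat (zst i) * rho i" K] zst0 zval by (simp add: K_def)
    have ds: "(\<Sum>i<K. of_int (\<delta> i) * rho i) = 0"
    proof -
      have "(\<Sum>i<K. of_int (\<delta> i) * rho i) = (\<Sum>i<K. of_nat (z i) * rho i) - (\<Sum>i<K. of_nat (zst i) * rho i)"
        unfolding \<delta>_def by (simp add: sum_subtractf algebra_simps)
      then show ?thesis using v1 v2 by simp
    qed
    obtain F where F: "\<forall>i\<ge>K. F i = 0" "\<forall>i. \<delta> i = AA i * F i - pb BB F i"
      using flow_ex[rule_format, of K 0 K \<delta>] dK ds by auto
    have zzF: "zz AA BB zs F i = int (z i)" for i
      using F(2) unfolding zz_def zs_def \<delta>_def by (simp add: algebra_simps)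
    have fF: "S.feas zs F" unfolding S.feas_def fs_def using F(1) zzF by auto
    have "int (\<Sum>i<M. z i) = (\<Sum>i<Suc K. int (z i))"
      using sum_ext[of M "\<lambda>i. int (z i)" "Suc K"] zM(2) by (simp add: K_def)
    also have "\<dots> = (\<Sum>i<Suc K. int (zst i)) + (\<Sum>i<Suc K. AA i * F i - pb BB F i)"
    proof -
      have pw: "int (z i) = int (zst i) + (AA i * F i - pb BB F i)" for i
        using F(2) unfolding \<delta>_def by (metis add_diff_cancel_left' diff_add_cancel)
      show ?thesis unfolding pw by (simp add: sum.distrib)
    qed
    also have "(\<Sum>i<Suc K. int (zst i)) = int (\<Sum>i<Ms. zst i)"
      using sum_ext[of Ms "\<lambda>i. int (zst i)" "Suc K"] zst0 by (simp add: K_def)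
    also have "(\<Sum>i<Suc K. AA i * F i - pb BB F i) = (\<Sum>i<K. (AA i - BB i) * F i)"
      by (rule tele_len[OF F(1)])
    also have "\<dots> = (a - b) * (\<Sum>i<K. ww i * F i)"
      unfolding AB_w by (simp add: sum_distrib_left algebra_simps)
    also have "(\<Sum>i<K. ww i * F i) = sig ww F" using sig_sum[OF F(1)] by simp
    finally have "n = int (\<Sum>i<Ms. zst i) + (a - b) * sig ww F" using zM(1) by simp
    moreover have "sig ww F \<in> S.Lam zs" unfolding S.Lam_def using fF by auto
    ultimately show "n \<in> (\<lambda>l. int (\<Sum>i<Ms. zst i) + (a - b) * l) ` S.Lam (\<lambda>i. int (zst i))"
      unfolding zs_def by auto
  qed
  show "(\<lambda>l. int (\<Sum>i<Ms. zst i) + (a - b) * l) ` S.Lam (\<lambda>i. int (zst i))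
     \<subseteq> int ` {\<Sum>i<M. z i | z M. (\<forall>i\<ge>M. z i = 0) \<and> (\<Sum>i<M. of_nat (z i) * rho i) = x}"
  proof
    fix n assume "n \<in> (\<lambda>l. int (\<Sum>i<Ms. zst i) + (a - b) * l) ` S.Lam (\<lambda>i. int (zst i))"
    then obtain F where F: "S.feas zs F" "n = int (\<Sum>i<Ms. zst i) + (a - b) * sig ww F"
      unfolding S.Lam_def zs_def by auto
    obtain M1 where M1: "\<forall>i\<ge>M1. F i = 0" using F(1) unfolding S.feas_def fs_def by auto
    define K where "K = max M1 Ms"
    have FK: "\<forall>i\<ge>K. F i = 0" using M1 by (simp add: K_def)
    have zz0: "zz AA BB zs F i \<ge> 0" for i using F(1) S.feas_def by auto
    define z where "z = (\<lambda>i. nat (zz AA BB zs F i))"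
    have zi: "int (z i) = zz AA BB zs F i" for i using zz0[of i] by (simp add: z_def)
    have z0: "\<forall>i\<ge>Suc K. z i = 0"
    proof (intro allI impI)
      fix i assume i: "i \<ge> Suc K"
      then have iK: "i \<ge> K" "i - 1 \<ge> K" "i \<ge> Ms" by (auto simp: K_def)
      have "zs i = 0" using zst0 iK by (simp add: zs_def)
      moreover have "F i = 0" "F (i - 1) = 0" using FK iK by auto
      ultimately have "zs i = 0" "F i = 0" "F (i - 1) = 0" by auto
      then have "zz AA BB zs F i = 0" using i unfolding zz_def pb_def by simp
      then show "z i = 0" by (simp add: z_def)
    qed
    have zzs: "zz AA BB zs F i = zs i + (AA i * F i - pb BB F i)" for i unfolding zz_def by simp
    have "(\<Sum>i<Suc K. of_nat (z i) * rho i) = (\<Sum>i<Suc K. of_int (zz AA BB zs F i) * rho i)"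
      by (rule sum.cong) (auto simp: zi[symmetric])
    also have "\<dots> = (\<Sum>i<Suc K. of_int (zs i) * rho i) + (\<Sum>i<Suc K. of_int (AA i * F i - pb BB F i) * rho i)"
      unfolding zzs by (simp add: sum.distrib distrib_right)
    also have "(\<Sum>i<Suc K. of_int (AA i * F i - pb BB F i) * rho i) = 0" by (rule tele_val[OF FK])
    also have "(\<Sum>i<Suc K. of_int (zs i) * rho i) = (\<Sum>i<Ms. of_nat (zst i) * rho i)"
      using sum_ext[of Ms "\<lambda>i. of_nat (zst i) * rho i" "Suc K"] zst0 by (simp add: K_def zs_def)
    finally have val: "(\<Sum>i<Suc K. of_nat (z i) * rho i) = x" using zval by simp
    have "int (\<Sum>i<Suc K. z i) = (\<Sum>i<Suc K. zz AA BB zs F i)" by (simp add: zi)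
    also have "\<dots> = (\<Sum>i<Suc K. zs i) + (\<Sum>i<Suc K. AA i * F i - pb BB F i)"
      unfolding zzs by (simp add: sum.distrib)
    also have "(\<Sum>i<Suc K. zs i) = int (\<Sum>i<Ms. zst i)"
      using sum_ext[of Ms "\<lambda>i. int (zst i)" "Suc K"] zst0 by (simp add: K_def zs_def)
    also have "(\<Sum>i<Suc K. AA i * F i - pb BB F i) = (\<Sum>i<K. (AA i - BB i) * F i)"
      by (rule tele_len[OF FK])
    also have "\<dots> = (a - b) * (\<Sum>i<K. ww i * F i)"
      unfolding AB_w by (simp add: sum_distrib_left algebra_simps)
    also have "(\<Sum>i<K. ww i * F i) = sig ww F" using sig_sum[OF FK] by simp
    finally have "int (\<Sum>i<Suc K. z i) = n" using F(2) by simp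
    then show "n \<in> int ` {\<Sum>i<M. z i | z M. (\<forall>i\<ge>M. z i = 0) \<and> (\<Sum>i<M. of_nat (z i) * rho i) = x}"
      using z0 val by blast
  qed
qed

end


lemma sig_neg: assumes "fs G" shows "sig w (\<lambda>i. - G i) = - sig w G"
proof -
  obtain M where M: "\<forall>i\<ge>M. G i = 0" using assms fs_def by auto
  have M': "\<forall>i\<ge>M. - G i = 0" using M by simp
  show ?thesis unfolding sig_sum[OF M] sig_sum[OF M'] by (simp add: sum_negf)
qed

lemma fs_neg: "fs G \<Longrightarrow> fs (\<lambda>i. - G i)" unfolding fs_def by simp

lemma zz2_neg: "zz2 A B zs G i = zz A B zs (\<lambda>i. - G i) i"
  unfolding zz2_def zz_def pb_def by simp

lemma caseIII:
  fixes r :: rat and N :: "nat set" and a b :: int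
  assumes NM: "numerical_monoid N" and r: "r = of_int a / of_int b" and a2: "a \<ge> 2" and b2: "b \<ge> 2"
    and cop: "coprime a b"
  shows "\<exists>B. \<forall>x\<in>exp_puiseux r N. AAP \<bar>a - b\<bar> B (int ` lengths (exp_puiseux r N) x)"
proof -
  define e where "e = enumerate N"
  have inf: "infinite N" by (rule N_infinite[OF NM])
  have sm: "strict_mono e" unfolding e_def by (rule strict_mono_enumerate[OF inf])
  have rngE: "range e = N" unfolding e_def by (rule range_enumerate[OF inf])
  obtain p where p: "p \<ge> 1" "\<forall>i\<ge>p. e (Suc i) = Suc (e i)" using enum_tail[OF NM] unfolding e_def by blast
  interpret C: c3 a b e p
    by unfold_locales (use a2 b2 cop sm p in auto)
  have ab: "a \<noteq> b"
  proof
    assume "a = b" then have "is_unit a" using cop by simp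
    then show False using a2 by simp
  qed
  have rpos: "r > 0" using r a2 b2 by simp
  have rne1: "r \<noteq> 1"
  proof
    assume "r = 1" then have "(of_int a :: rat) = of_int b" using r b2 by (simp add: field_simps)
    then show False using ab by simp
  qed
  have rho_eq: "C.rho i = r ^ e i" for i unfolding C.rho_def r by simp
  define G where "G = {r ^ k | k. k \<in> N}"
  have SG: "exp_puiseux r N = gen_monoid G" unfolding exp_puiseux_def G_def by simp
  have GR: "G = range C.rho" unfolding G_def rho_eq using rngE by auto
  have AT: "atoms (exp_puiseux r N) = range C.rho"
    using atomsIII[OF r a2 b2 cop, of N] GR unfolding SG G_def by simp
  have injr: "inj C.rho"
  proof (rule injI)
    fix i j assume "C.rho i = C.rho j"
    then have "r ^ e i = r ^ e j" by (simp add: rho_eq)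
    then have "e i = e j" using power_inject_exp'[OF rne1 rpos] by blast
    then show "i = j" using sm by (simp add: strict_mono_eq)
  qed
  define LL where "LL x = {\<Sum>i<M. z i | z M. (\<forall>i\<ge>M. z i = 0) \<and> (\<Sum>i<M. of_nat (z i) * C.rho i) = x}" for x
  have LZx: "lengths (exp_puiseux r N) x = LL x" for x unfolding LL_def by (rule LZ[OF injr AT])
  have ne: "LL x \<noteq> {}" if xS: "x \<in> exp_puiseux r N" for x
  proof -
    obtain m where m: "set_mset m \<subseteq> G" "sum_mset m = x" using xS SG gm_iff by auto
    then have "size m \<in> lengths (exp_puiseux r N) x" unfolding lengths_def using AT GR by auto
    then show ?thesis using LZx by auto
  qed
  have minfact: "\<exists>zst Ms. (\<forall>i\<ge>Ms. zst i = 0) \<and> (\<Sum>i<Ms. of_nat (zst i) * C.rho i) = x \<and> (\<forall>n\<in>LL x. (\<Sum>i<Ms. zst i) \<le> n)"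
    if xS: "x \<in> exp_puiseux r N" for x
  proof -
    define l0 where "l0 = (LEAST n. n \<in> LL x)"
    obtain n where "n \<in> LL x" using ne[OF xS] by auto
    then have l0in: "l0 \<in> LL x" unfolding l0_def by (rule LeastI)
    have l0min: "\<forall>n\<in>LL x. l0 \<le> n" unfolding l0_def by (auto intro: Least_le)
    from l0in obtain zst Ms where "l0 = (\<Sum>i<Ms. zst i)" "\<forall>i\<ge>Ms. zst i = 0" "(\<Sum>i<Ms. of_nat (zst i) * C.rho i) = x"
      unfolding LL_def by auto
    then show ?thesis using l0min by metis
  qed
  show ?thesis
  proof (cases "a > b")
    case True
    obtain K where K: "K \<ge> 0" "\<forall>zs. (\<forall>i. zs i \<ge> 0) \<longrightarrow> (\<forall>F. C.S.feas zs F \<longrightarrow> sig C.ww F \<ge> 0) \<longrightarrow>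
      ((\<exists>Y\<ge>0. (\<forall>n. 0 \<le> n \<and> n \<le> Y \<longrightarrow> n \<in> C.S.Lam zs) \<and> (\<forall>l\<in>C.S.Lam zs. 0 \<le> l \<and> l \<le> Y + K))
      \<or> ((\<forall>n\<ge>0. n \<in> C.S.Lam zs) \<and> (\<forall>l\<in>C.S.Lam zs. 0 \<le> l)))"
      using C.S.core_gt by blast
    show ?thesis
    proof (intro exI[of _ "nat ((a - b) * K)"] ballI)
      fix x assume xS: "x \<in> exp_puiseux r N"
      obtain zst Ms where z: "\<forall>i\<ge>Ms. zst i = 0" "(\<Sum>i<Ms. of_nat (zst i) * C.rho i) = x" "\<forall>n\<in>LL x. (\<Sum>i<Ms. zst i) \<le> n"
        using minfact[OF xS] by blast
      define zs where "zs = (\<lambda>i. int (zst i))"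
      define l0 where "l0 = (\<Sum>i<Ms. zst i)"
      have ch: "int ` LL x = (\<lambda>l. int l0 + (a - b) * l) ` C.S.Lam zs"
        unfolding LL_def l0_def zs_def by (rule C.char[OF z(1,2)])
      have zs0: "\<forall>i. zs i \<ge> 0" by (simp add: zs_def)
      have mn: "\<forall>F. C.S.feas zs F \<longrightarrow> sig C.ww F \<ge> 0"
      proof (intro allI impI)
        fix F assume "C.S.feas zs F"
        then have "sig C.ww F \<in> C.S.Lam zs" unfolding C.S.Lam_def by auto
        then have "int l0 + (a - b) * sig C.ww F \<in> int ` LL x" using ch by auto
        then obtain n where n: "n \<in> LL x" "int n = int l0 + (a - b) * sig C.ww F" by auto
        have "l0 \<le> n" using z(3) n(1) unfolding l0_def by auto
        then have "(a - b) * sig C.ww F \<ge> 0" using n(2) by simp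
        then show "sig C.ww F \<ge> 0" using True by (simp add: zero_le_mult_iff)
      qed
      have H: "(\<exists>Y\<ge>0. (\<forall>n. 0 \<le> n \<and> n \<le> Y \<longrightarrow> n \<in> C.S.Lam zs) \<and> (\<forall>l\<in>C.S.Lam zs. 0 \<le> l \<and> l \<le> Y + K))
      \<or> ((\<forall>n\<ge>0. n \<in> C.S.Lam zs) \<and> (\<forall>l\<in>C.S.Lam zs. 0 \<le> l))"
        using K(2) zs0 mn by blast
      have "AAP (a - b) (nat ((a - b) * K)) (int ` LL x)"
        by (rule AAP_gt[OF _ K(1) ch H]) (use True in simp)
      then show "AAP \<bar>a - b\<bar> (nat ((a - b) * K)) (int ` lengths (exp_puiseux r N) x)"
        using True LZx by simp
    qed
  next
    case False
    then have ba: "b > a" using ab by simp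
    interpret D: sysl C.AA C.BB C.ww p a b
    proof unfold_locales
      show "b > a" by (rule ba)
      show "p \<ge> 1" by (rule p(1))
      show "C.BB i \<ge> b" for i
      proof -
        have "b ^ 1 \<le> b ^ C.kk i" using C.kk1[of i] b2 by (intro power_increasing) auto
        then show ?thesis unfolding C.BB_def by simp
      qed
    qed
    obtain K where K: "K \<ge> 0" "\<forall>zs. (\<forall>i. zs i \<ge> 0) \<longrightarrow> (\<forall>G. D.feas2 zs G \<longrightarrow> sig C.ww G \<ge> 0) \<longrightarrow>
      ((\<exists>Y. 0 \<le> Y \<and> Y \<le> K \<and> (\<forall>n\<ge>Y. n \<in> D.Lam2 zs) \<and> (\<forall>l\<in>D.Lam2 zs. 0 \<le> l))
      \<or> (\<forall>l\<in>D.Lam2 zs. 0 \<le> l \<and> l \<le> K))"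
      using D.core_lt by blast
    show ?thesis
    proof (intro exI[of _ "nat ((b - a) * K)"] ballI)
      fix x assume xS: "x \<in> exp_puiseux r N"
      obtain zst Ms where z: "\<forall>i\<ge>Ms. zst i = 0" "(\<Sum>i<Ms. of_nat (zst i) * C.rho i) = x" "\<forall>n\<in>LL x. (\<Sum>i<Ms. zst i) \<le> n"
        using minfact[OF xS] by blast
      define zs where "zs = (\<lambda>i. int (zst i))"
      define l0 where "l0 = (\<Sum>i<Ms. zst i)"
      have ch: "int ` LL x = (\<lambda>l. int l0 + (a - b) * l) ` C.S.Lam zs"
        unfolding LL_def l0_def zs_def by (rule C.char[OF z(1,2)])
      have feq: "D.feas2 zs G \<longleftrightarrow> C.S.feas zs (\<lambda>i. - G i)" for G
        unfolding D.feas2_def C.S.feas_def zz2_neg using fs_neg[of G] fs_neg[of "\<lambda>i. - G i"] by auto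
      have L2: "D.Lam2 zs = uminus ` C.S.Lam zs"
      proof
        show "D.Lam2 zs \<subseteq> uminus ` C.S.Lam zs"
        proof
          fix l assume "l \<in> D.Lam2 zs"
          then obtain G where G: "D.feas2 zs G" "l = sig C.ww G" unfolding D.Lam2_def by auto
          have "C.S.feas zs (\<lambda>i. - G i)" using G(1) feq by simp
          moreover have "sig C.ww (\<lambda>i. - G i) = - l" using sig_neg[of G C.ww] G D.feas2_def by simp
          ultimately have "- l \<in> C.S.Lam zs" unfolding C.S.Lam_def by (metis (mono_tags) imageI mem_Collect_eq)
          then show "l \<in> uminus ` C.S.Lam zs" by (metis add.inverse_inverse image_eqI)
        qed
        show "uminus ` C.S.Lam zs \<subseteq> D.Lam2 zs"
        proof
          fix l assume "l \<in> uminus ` C.S.Lam zs"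
          then obtain F where F: "C.S.feas zs F" "l = - sig C.ww F" unfolding C.S.Lam_def by auto
          have "D.feas2 zs (\<lambda>i. - F i)" using F(1) feq by simp
          moreover have "sig C.ww (\<lambda>i. - F i) = l" using sig_neg[of F C.ww] F C.S.feas_def by simp
          ultimately show "l \<in> D.Lam2 zs" unfolding D.Lam2_def by (metis (mono_tags) imageI mem_Collect_eq)
        qed
      qed
      have ch2: "int ` LL x = (\<lambda>l. int l0 + (b - a) * l) ` D.Lam2 zs"
      proof -
        have "(\<lambda>l. int l0 + (a - b) * l) ` C.S.Lam zs = (\<lambda>l. int l0 + (b - a) * l) ` (uminus ` C.S.Lam zs)"
          by (auto simp: image_image algebra_simps)
        then show ?thesis using ch L2 by simp
      qed
      have zs0: "\<forall>i. zs i \<ge> 0" by (simp add: zs_def)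
      have mn: "\<forall>G. D.feas2 zs G \<longrightarrow> sig C.ww G \<ge> 0"
      proof (intro allI impI)
        fix G assume "D.feas2 zs G"
        then have "sig C.ww G \<in> D.Lam2 zs" unfolding D.Lam2_def by auto
        then have "int l0 + (b - a) * sig C.ww G \<in> int ` LL x" using ch2 by auto
        then obtain n where n: "n \<in> LL x" "int n = int l0 + (b - a) * sig C.ww G" by auto
        have "l0 \<le> n" using z(3) n(1) unfolding l0_def by auto
        then have "(b - a) * sig C.ww G \<ge> 0" using n(2) by simp
        then show "sig C.ww G \<ge> 0" using ba by (simp add: zero_le_mult_iff)
      qed
      have z0: "0 \<in> D.Lam2 zs"
      proof -
        have "D.feas2 zs (\<lambda>i. 0)" by (rule D.feas2_zero) (simp add: zs_def)
        then have "sig C.ww (\<lambda>i. 0) \<in> D.Lam2 zs" unfolding D.Lam2_def by (intro imageI CollectI)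
        then show ?thesis by (simp add: sig_zero)
      qed
      have H: "(\<exists>Y. 0 \<le> Y \<and> Y \<le> K \<and> (\<forall>n\<ge>Y. n \<in> D.Lam2 zs) \<and> (\<forall>l\<in>D.Lam2 zs. 0 \<le> l))
      \<or> (\<forall>l\<in>D.Lam2 zs. 0 \<le> l \<and> l \<le> K)"
        using K(2) zs0 mn by blast
      have "AAP (b - a) (nat ((b - a) * K)) (int ` LL x)"
        by (rule AAP_lt[OF _ K(1) ch2 z0 H]) (use ba in simp)
      then show "AAP \<bar>a - b\<bar> (nat ((b - a) * K)) (int ` lengths (exp_puiseux r N) x)"
        using ba LZx by simp
    qed
  qed
qed

theorem mainTheorem3:
  fixes r :: rat and N :: "nat set"
  assumes "numerical_monoid N" and "r > 0" and "r \<noteq> 1"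
    and "atomic (exp_puiseux r N)"
  shows "\<exists>B::nat. \<forall>x\<in>exp_puiseux r N.
           AAP \<bar>numer r - denom r\<bar> B (int ` lengths (exp_puiseux r N) x)"
proof -
  define a where "a = numer r"
  define b where "b = denom r"
  have q: "quotient_of r = (a, b)" unfolding a_def b_def numer_def denom_def by simp
  have r: "r = of_int a / of_int b" by (rule quotient_of_div[OF q])
  have b0: "b > 0" by (rule quotient_of_denom_pos[OF q])
  have cop: "coprime a b" by (rule quotient_of_coprime[OF q])
  have a0: "a > 0"
  proof -
    have "(of_int a :: rat) / of_int b > 0" using assms(2) r by simp
    then show ?thesis using b0 by (simp add: zero_less_divide_iff)
  qed
  show ?thesis
  proof (cases "b = 1")
    case True
    then have ra: "r = of_int a" using r by simp
    have "a \<noteq> 1" using assms(3) ra by auto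
    then have "a \<ge> 2" using a0 by simp
    then show ?thesis using caseI[OF assms(1) ra] unfolding a_def[symmetric] b_def[symmetric] by blast
  next
    case False
    then have b2: "b \<ge> 2" using b0 by simp
    show ?thesis
    proof (cases "a = 1")
      case True
      then have "r = 1 / of_int b" using r by simp
      then have "\<not> atomic (exp_puiseux r N)" using caseII[OF assms(1) _ b2] by blast
      then show ?thesis using assms(4) by simp
    next
      case False
      then have a2: "a \<ge> 2" using a0 by simp
      show ?thesis using caseIII[OF assms(1) r a2 b2 cop] unfolding a_def b_def by blast
    qed
  qed
qed


end
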